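(* Let $R=\mathbb{C}[x,y,z]$ and $J=(yz(y-z),\,zx(z-x),\,xy(x-y))\subseteq R$. Then (1) $\widehat{\alpha}(J)=\frac{5}{2}$; (2) $\alpha(J^{(2k)})=5k$ for all $k\ge 2$; (3) $\alpha(J^{(2k+1)})=5k+3$ for all $k\ge 0$; (4) $\alpha(J^{(2)})=6$.
   Context: For a homogeneous ideal $I$, $\alpha(I)$ denotes the least degree of a nonzero homogeneous element of $I$; $I^{(m)}=\bigcap_{\mathfrak p\in \operatorname{Ass}(R/I)} (I^mR_{\mathfrak p}\cap R)$ is the $m$-th symbolic power (with $I^{(1)}=I$); $\widehat{\alpha}(I)=\lim_{m\to\infty}\alpha(I^{(m)})/m$ is the Waldschmidt constant. *)

theory Defs
  imports Complex_Main "HOL-Computational_Algebra.Polynomial"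
begin

text \<open>The polynomial ring C[x,y,z] is modelled as complex poly poly poly:
  the outermost variable is z, the middle one y, the innermost one x.\<close>

type_synonym cpoly3 = "complex poly poly poly"

definition X :: cpoly3 where "X = [:[:[:0, 1:]:]:]"
definition Y :: cpoly3 where "Y = [:[:0, 1:]:]"
definition Z :: cpoly3 where "Z = [:0, 1:]"

definition coeff3 :: "cpoly3 \<Rightarrow> nat \<Rightarrow> nat \<Rightarrow> nat \<Rightarrow> complex" where
  "coeff3 f i j k = coeff (coeff (coeff f k) j) i"

definition homog_of_deg :: "cpoly3 \<Rightarrow> nat \<Rightarrow> bool" where
  "homog_of_deg f d \<longleftrightarrow> (\<forall>i j k. coeff3 f i j k \<noteq> 0 \<longrightarrow> i + j + k = d)"

definition alpha :: "cpoly3 set \<Rightarrow> nat" where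
  "alpha I = (LEAST d. \<exists>f\<in>I. f \<noteq> 0 \<and> homog_of_deg f d)"

definition is_ideal :: "'a::comm_ring_1 set \<Rightarrow> bool" where
  "is_ideal I \<longleftrightarrow> 0 \<in> I \<and> (\<forall>a\<in>I. \<forall>b\<in>I. a + b \<in> I) \<and> (\<forall>r a. a \<in> I \<longrightarrow> r * a \<in> I)"

definition is_prime_ideal :: "'a::comm_ring_1 set \<Rightarrow> bool" where
  "is_prime_ideal P \<longleftrightarrow> is_ideal P \<and> P \<noteq> UNIV \<and> (\<forall>a b. a * b \<in> P \<longrightarrow> a \<in> P \<or> b \<in> P)"

definition ideal_gen :: "'a::comm_ring_1 set \<Rightarrow> 'a set" where
  "ideal_gen S = \<Inter>{I. is_ideal I \<and> S \<subseteq> I}"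

fun ideal_pow :: "'a::comm_ring_1 set \<Rightarrow> nat \<Rightarrow> 'a set" where
  "ideal_pow I 0 = UNIV"
| "ideal_pow I (Suc m) = ideal_gen {a * b | a b. a \<in> ideal_pow I m \<and> b \<in> I}"

definition ass :: "'a::comm_ring_1 set \<Rightarrow> 'a set set" where
  "ass I = {P. is_prime_ideal P \<and> (\<exists>f. P = {g. g * f \<in> I})}"

text \<open>Symbolic power: intersection over P in Ass(R/I) of the contractions
  I^m R_P \<inter> R = {f. \<exists>s\<notin>P. s f \<in> I^m}\<close>
definition symb_pow :: "'a::comm_ring_1 set \<Rightarrow> nat \<Rightarrow> 'a set" where
  "symb_pow I m = (\<Inter>P\<in>ass I. {f. \<exists>s. s \<notin> P \<and> s * f \<in> ideal_pow I m})"

definition Jideal :: "cpoly3 set" where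
  "Jideal = ideal_gen {Y * Z * (Y - Z), Z * X * (Z - X), X * Y * (X - Y)}"

end

theory Submission
  imports Defs
begin


lemma ideal_gen_ideal: "is_ideal (ideal_gen S)"
  unfolding is_ideal_def ideal_gen_def by blast

lemma ideal_gen_sub: "S \<subseteq> ideal_gen S"
  unfolding ideal_gen_def by blast

lemma ideal_gen_least: "is_ideal I \<Longrightarrow> S \<subseteq> I \<Longrightarrow> ideal_gen S \<subseteq> I"
  unfolding ideal_gen_def by blast

lemma ideal_0: "is_ideal I \<Longrightarrow> 0 \<in> I" unfolding is_ideal_def by blast
lemma ideal_add: "is_ideal I \<Longrightarrow> a \<in> I \<Longrightarrow> b \<in> I \<Longrightarrow> a + b \<in> I" unfolding is_ideal_def by blast
lemma ideal_mult: "is_ideal I \<Longrightarrow> a \<in> I \<Longrightarrow> r * a \<in> I" unfolding is_ideal_def by blast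
lemma ideal_mult2: "is_ideal I \<Longrightarrow> a \<in> I \<Longrightarrow> a * r \<in> I" using ideal_mult[of I a r] by (simp add: mult.commute)
lemma ideal_uminus: "is_ideal I \<Longrightarrow> a \<in> I \<Longrightarrow> - a \<in> I"
  using ideal_mult[of I a "-1"] by simp
lemma ideal_diff: "is_ideal I \<Longrightarrow> a \<in> I \<Longrightarrow> b \<in> I \<Longrightarrow> a - b \<in> I"
  using ideal_add[of I a "-b"] ideal_uminus[of I b] by simp
lemma ideal_sum: "is_ideal I \<Longrightarrow> (\<And>x. x \<in> A \<Longrightarrow> f x \<in> I) \<Longrightarrow> sum f A \<in> I"
  by (induction A rule: infinite_finite_induct) (auto intro: ideal_0 ideal_add)

lemma ideal_1_UNIV: "is_ideal I \<Longrightarrow> 1 \<in> I \<Longrightarrow> I = UNIV"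
  using ideal_mult[of I 1] by auto

lemma ideal_pow_ideal: "is_ideal I \<Longrightarrow> is_ideal (ideal_pow I m)"
  by (cases m) (auto simp: is_ideal_def ideal_gen_ideal[unfolded is_ideal_def])

lemma ideal_pow_step: "a \<in> ideal_pow I m \<Longrightarrow> b \<in> I \<Longrightarrow> a * b \<in> ideal_pow I (Suc m)"
  using ideal_gen_sub[of "{a * b |a b. a \<in> ideal_pow I m \<and> b \<in> I}"] by auto

lemma ideal_pow_1: "is_ideal I \<Longrightarrow> ideal_pow I 1 = I"
proof
  assume I: "is_ideal I"
  have "{a * b |a b. a \<in> ideal_pow I 0 \<and> b \<in> I} \<subseteq> I"
    using I by (auto intro: ideal_mult)
  then show "ideal_pow I 1 \<subseteq> I"
    using ideal_gen_least[OF I] by (simp add: One_nat_def)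
  show "I \<subseteq> ideal_pow I 1"
    using ideal_pow_step[of 1 I 0] by auto
qed

lemma ideal_pow_mult:
  assumes I: "is_ideal I"
  shows "a \<in> ideal_pow I m \<Longrightarrow> b \<in> ideal_pow I n \<Longrightarrow> a * b \<in> ideal_pow I (m + n)"
proof (induction n arbitrary: b)
  case 0
  then show ?case using ideal_pow_ideal[OF I, of m] by (auto intro: ideal_mult2)
next
  case (Suc n)
  let ?K = "{b. a * b \<in> ideal_pow I (m + Suc n)}"
  have K: "is_ideal ?K"
    using ideal_pow_ideal[OF I, of "m + Suc n"]
    unfolding is_ideal_def by (auto simp: distrib_left mult.left_commute)
  have "{c * d |c d. c \<in> ideal_pow I n \<and> d \<in> I} \<subseteq> ?K"
  proof
    fix x assume "x \<in> {c * d |c d. c \<in> ideal_pow I n \<and> d \<in> I}"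
    then obtain c d where x: "x = c * d" "c \<in> ideal_pow I n" "d \<in> I" by blast
    have "a * c \<in> ideal_pow I (m + n)" using Suc x by blast
    then have "(a * c) * d \<in> ideal_pow I (Suc (m + n))" using ideal_pow_step x by blast
    then show "x \<in> ?K" using x by (simp add: mult.assoc)
  qed
  then have "ideal_gen {c * d |c d. c \<in> ideal_pow I n \<and> d \<in> I} \<subseteq> ?K"
    by (rule ideal_gen_least[OF K])
  then show ?case using Suc.prems by auto
qed

lemma ideal_pow_induct:
  assumes I: "is_ideal I"
    and K: "\<And>m. is_ideal (K m)" and K0: "\<And>x. x \<in> K 0"
    and KS: "\<And>m a b. a \<in> K m \<Longrightarrow> b \<in> I \<Longrightarrow> a * b \<in> K (Suc m)"
  shows "ideal_pow I m \<subseteq> K m"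
proof (induction m)
  case 0 then show ?case using K0 by auto
next
  case (Suc m)
  have "{a * b |a b. a \<in> ideal_pow I m \<and> b \<in> I} \<subseteq> K (Suc m)"
    using Suc KS by blast
  then show ?case by (auto dest: ideal_gen_least[OF K])
qed

lemma prime_ideal_notin_mult:
  "is_prime_ideal P \<Longrightarrow> a \<notin> P \<Longrightarrow> b \<notin> P \<Longrightarrow> a * b \<notin> P"
  unfolding is_prime_ideal_def by blast

lemma prime_ideal_notin_power:
  "is_prime_ideal P \<Longrightarrow> a \<notin> P \<Longrightarrow> a ^ n \<notin> P"
proof (induction n)
  case 0 then show ?case unfolding is_prime_ideal_def using ideal_1_UNIV by auto
next
  case (Suc n) then show ?case using prime_ideal_notin_mult by auto
qed

lemma symb_pow_mult:
  assumes I: "is_ideal I" and f: "f \<in> symb_pow I a" and g: "g \<in> symb_pow I b"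
  shows "f * g \<in> symb_pow I (a + b)"
  unfolding symb_pow_def
proof (intro InterI, clarsimp)
  fix P assume P: "P \<in> ass I"
  then have Pp: "is_prime_ideal P" unfolding ass_def by auto
  obtain s where s: "s \<notin> P" "s * f \<in> ideal_pow I a" using f P unfolding symb_pow_def by blast
  obtain t where t: "t \<notin> P" "t * g \<in> ideal_pow I b" using g P unfolding symb_pow_def by blast
  have "(s * f) * (t * g) \<in> ideal_pow I (a + b)" using ideal_pow_mult[OF I s(2) t(2)] .
  moreover have "s * t \<notin> P" using prime_ideal_notin_mult[OF Pp s(1) t(1)] .
  ultimately show "\<exists>s. s \<notin> P \<and> s * (f * g) \<in> ideal_pow I (a + b)"
    by (intro exI[of _ "s * t"]) (simp add: ac_simps)
qed

definition rhom :: "('a::comm_ring_1 \<Rightarrow> 'b::comm_ring_1) \<Rightarrow> bool" where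
  "rhom \<phi> \<longleftrightarrow> \<phi> 0 = 0 \<and> \<phi> 1 = 1 \<and> (\<forall>x y. \<phi> (x + y) = \<phi> x + \<phi> y) \<and> (\<forall>x y. \<phi> (x * y) = \<phi> x * \<phi> y)"

lemma rhomD:
  assumes "rhom \<phi>"
  shows "\<phi> 0 = 0" "\<phi> 1 = 1" "\<phi> (x + y) = \<phi> x + \<phi> y" "\<phi> (x * y) = \<phi> x * \<phi> y"
  using assms unfolding rhom_def by auto

lemma rhom_uminus: "rhom \<phi> \<Longrightarrow> \<phi> (- x) = - \<phi> x"
  using rhomD(3)[of \<phi> x "-x"] rhomD(1)[of \<phi>] by (simp add: eq_neg_iff_add_eq_0 add.commute)

lemma rhom_diff: "rhom \<phi> \<Longrightarrow> \<phi> (x - y) = \<phi> x - \<phi> y"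
  using rhomD(3)[of \<phi> x "-y"] rhom_uminus[of \<phi> y] by simp

lemma rhom_power: "rhom \<phi> \<Longrightarrow> \<phi> (x ^ n) = \<phi> x ^ n"
  by (induction n) (auto simp: rhomD)

lemma rhom_sum: "rhom \<phi> \<Longrightarrow> \<phi> (sum f A) = (\<Sum>a\<in>A. \<phi> (f a))"
  by (induction A rule: infinite_finite_induct) (auto simp: rhomD)

lemma rhom_of_nat: "rhom \<phi> \<Longrightarrow> \<phi> (of_nat n) = of_nat n"
  by (induction n) (auto simp: rhomD)

lemma rhom_numeral: "rhom \<phi> \<Longrightarrow> \<phi> (numeral n) = numeral n"
  using rhom_of_nat[of \<phi> "numeral n"] by simp

lemma rhom_id: "rhom id" unfolding rhom_def by simp
lemma rhom_id': "rhom (\<lambda>x. x)" unfolding rhom_def by simp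
lemma rhom_const_poly: "rhom (\<lambda>c. [:c:])" unfolding rhom_def by (simp add: one_pCons)

lemma rhom_comp: "rhom \<phi> \<Longrightarrow> rhom \<psi> \<Longrightarrow> rhom (\<psi> \<circ> \<phi>)"
  unfolding rhom_def by simp

lemma map_poly_add_hom:
  "rhom \<phi> \<Longrightarrow> map_poly \<phi> (p + q) = map_poly \<phi> p + map_poly \<phi> q"
  by (intro poly_eqI) (simp add: coeff_map_poly rhomD)

lemma map_poly_mult_hom:
  assumes h: "rhom \<phi>"
  shows "map_poly \<phi> (p * q) = map_poly \<phi> p * map_poly \<phi> q"
proof (intro poly_eqI)
  fix n
  show "coeff (map_poly \<phi> (p * q)) n = coeff (map_poly \<phi> p * map_poly \<phi> q) n"
    by (simp add: coeff_map_poly rhomD[OF h] coeff_mult rhom_sum[OF h])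
qed

lemma rhom_map_poly: "rhom \<phi> \<Longrightarrow> rhom (map_poly \<phi>)"
  unfolding rhom_def[of "map_poly \<phi>"]
  by (auto simp: map_poly_add_hom map_poly_mult_hom rhomD)

lemma rhom_poly_eval: "rhom (\<lambda>p. poly p a)"
  unfolding rhom_def by simp

lemma rhom_compose_eval: "rhom \<phi> \<Longrightarrow> rhom (\<lambda>p. poly (map_poly \<phi> p) a)"
  using rhom_comp[OF rhom_map_poly rhom_poly_eval, of \<phi> a] by (simp add: o_def)

lemma rhom_poly_comm:
  assumes h: "rhom \<psi>"
  shows "\<psi> (poly p x) = poly (map_poly \<psi> p) (\<psi> x)"
proof (induction p)
  case 0 then show ?case by (simp add: rhomD[OF h])
next
  case (pCons a p)
  then show ?case by (simp add: map_poly_pCons rhomD[OF h])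
qed

definition ev3 :: "(complex \<Rightarrow> 'a::comm_ring_1) \<Rightarrow> 'a \<Rightarrow> 'a \<Rightarrow> 'a \<Rightarrow> cpoly3 \<Rightarrow> 'a" where
  "ev3 h a b c f = poly (map_poly (\<lambda>q. poly (map_poly (\<lambda>p. poly (map_poly h p) a) q) b) f) c"

lemma rhom_ev3: "rhom h \<Longrightarrow> rhom (ev3 h a b c)"
  unfolding ev3_def[abs_def]
  by (intro rhom_compose_eval rhom_compose_eval)

lemma ev3_comm:
  assumes h: "rhom h" and psi: "rhom \<psi>"
  shows "\<psi> (ev3 h a b c f) = ev3 (\<psi> \<circ> h) (\<psi> a) (\<psi> b) (\<psi> c) f"
proof -
  let ?p1 = "\<lambda>p. poly (map_poly h p) a"
  let ?p2 = "\<lambda>q. poly (map_poly ?p1 q) b"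
  let ?p1' = "\<lambda>p. poly (map_poly (\<psi> \<circ> h) p) (\<psi> a)"
  let ?p2' = "\<lambda>q. poly (map_poly ?p1' q) (\<psi> b)"
  have r1: "rhom ?p1" by (rule rhom_compose_eval[OF h])
  have r2: "rhom ?p2" by (rule rhom_compose_eval[OF r1])
  have c1: "\<psi> (?p1 p) = ?p1' p" for p
    by (simp add: rhom_poly_comm[OF psi] map_poly_map_poly rhomD[OF h] rhomD[OF psi])
  have c2: "\<psi> (?p2 q) = ?p2' q" for q
  proof -
    have "\<psi> (?p2 q) = poly (map_poly \<psi> (map_poly ?p1 q)) (\<psi> b)" by (simp add: rhom_poly_comm[OF psi])
    also have "map_poly \<psi> (map_poly ?p1 q) = map_poly (\<psi> \<circ> ?p1) q"
      by (rule map_poly_map_poly) (auto simp: rhomD[OF h] rhomD[OF psi])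
    also have "(\<psi> \<circ> ?p1) = ?p1'" using c1 by (simp add: o_def)
    finally show ?thesis .
  qed
  have "\<psi> (ev3 h a b c f) = poly (map_poly \<psi> (map_poly ?p2 f)) (\<psi> c)"
    unfolding ev3_def by (simp add: rhom_poly_comm[OF psi])
  also have "map_poly \<psi> (map_poly ?p2 f) = map_poly (\<psi> \<circ> ?p2) f"
    by (rule map_poly_map_poly) (auto simp: rhomD[OF r2] rhomD[OF psi])
  also have "(\<psi> \<circ> ?p2) = ?p2'" using c2 by (simp add: o_def)
  finally show ?thesis unfolding ev3_def by simp
qed

context
  fixes h :: "complex \<Rightarrow> 'a::comm_ring_1" and a b c :: 'a
  assumes h: "rhom h"
begin
lemma ev3_add[simp]: "ev3 h a b c (f + g) = ev3 h a b c f + ev3 h a b c g"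
  using rhomD(3)[OF rhom_ev3[OF h]] by blast
lemma ev3_mult[simp]: "ev3 h a b c (f * g) = ev3 h a b c f * ev3 h a b c g"
  using rhomD(4)[OF rhom_ev3[OF h]] by blast
lemma ev3_diff[simp]: "ev3 h a b c (f - g) = ev3 h a b c f - ev3 h a b c g"
  using rhom_diff[OF rhom_ev3[OF h]] by blast
lemma ev3_uminus[simp]: "ev3 h a b c (- f) = - ev3 h a b c f"
  using rhom_uminus[OF rhom_ev3[OF h]] by blast
lemma ev3_power[simp]: "ev3 h a b c (f ^ n) = ev3 h a b c f ^ n"
  using rhom_power[OF rhom_ev3[OF h]] by blast
lemma ev3_1[simp]: "ev3 h a b c 1 = 1"
  using rhomD(2)[OF rhom_ev3[OF h]] by blast
lemma ev3_0[simp]: "ev3 h a b c 0 = 0"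
  using rhomD(1)[OF rhom_ev3[OF h]] by blast
lemma ev3_numeral[simp]: "ev3 h a b c (numeral n) = numeral n"
  using rhom_numeral[OF rhom_ev3[OF h]] by blast
lemma ev3_sum: "ev3 h a b c (sum f A) = (\<Sum>x\<in>A. ev3 h a b c (f x))"
  using rhom_sum[OF rhom_ev3[OF h]] by blast
lemma ev3_X[simp]: "ev3 h a b c X = a"
  unfolding ev3_def X_def by (simp add: map_poly_pCons rhomD[OF h])
lemma ev3_Y[simp]: "ev3 h a b c Y = b"
  unfolding ev3_def Y_def by (simp add: map_poly_pCons rhomD[OF h])
lemma ev3_Z[simp]: "ev3 h a b c Z = c"
  unfolding ev3_def Z_def by (simp add: map_poly_pCons rhomD[OF h])
lemma ev3_const[simp]: "ev3 h a b c [:[:[:x:]:]:] = h x"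
  unfolding ev3_def by (simp add: map_poly_pCons rhomD[OF h])
end




type_synonym pt = "complex \<times> complex \<times> complex"

definition px :: "pt \<Rightarrow> complex" where "px v = fst v"
definition py :: "pt \<Rightarrow> complex" where "py v = fst (snd v)"
definition pz :: "pt \<Rightarrow> complex" where "pz v = snd (snd v)"
lemma pxyz_simps[simp]: "px (a, b, c) = a" "py (a, b, c) = b" "pz (a, b, c) = c"
  by (simp_all add: px_def py_def pz_def)

definition lc :: "complex \<Rightarrow> pt \<Rightarrow> complex \<Rightarrow> pt \<Rightarrow> pt" where
  "lc s a t b = (s * px a + t * px b, s * py a + t * py b, s * pz a + t * pz b)"

definition sc :: "complex \<Rightarrow> pt \<Rightarrow> pt" where
  "sc s a = (s * px a, s * py a, s * pz a)"

lemma lc_simps[simp]: "px (lc s a t b) = s * px a + t * px b" "py (lc s a t b) = s * py a + t * py b"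
  "pz (lc s a t b) = s * pz a + t * pz b"
  by (simp_all add: lc_def)
lemma sc_simps[simp]: "px (sc s a) = s * px a" "py (sc s a) = s * py a" "pz (sc s a) = s * pz a"
  by (simp_all add: sc_def)

lemma pt_eqI: "px a = px b \<Longrightarrow> py a = py b \<Longrightarrow> pz a = pz b \<Longrightarrow> a = b"
  by (cases a; cases b) (simp add: px_def py_def pz_def)

definition val :: "cpoly3 \<Rightarrow> pt \<Rightarrow> complex" where
  "val f v = ev3 (\<lambda>x. x) (px v) (py v) (pz v) f"

definition const3 :: "complex \<Rightarrow> cpoly3" where "const3 c = [:[:[:c:]:]:]"

lemma val_simps[simp]:
  "val (f + g) v = val f v + val g v" "val (f * g) v = val f v * val g v"
  "val (f - g) v = val f v - val g v" "val (- f) v = - val f v"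
  "val (f ^ n) v = val f v ^ n" "val 1 v = 1" "val 0 v = 0" "val (numeral w) v = numeral w"
  "val X v = px v" "val Y v = py v" "val Z v = pz v" "val (const3 c) v = c"
  unfolding val_def const3_def by (simp_all add: rhom_id')

lemma val_sum: "val (sum f A) v = (\<Sum>x\<in>A. val (f x) v)"
  unfolding val_def by (simp add: ev3_sum rhom_id')

definition rst :: "pt \<Rightarrow> pt \<Rightarrow> cpoly3 \<Rightarrow> complex poly" where
  "rst a b f = ev3 (\<lambda>c. [:c:]) [:px a, px b:] [:py a, py b:] [:pz a, pz b:] f"

lemma rst_simps[simp]:
  "rst a b (f + g) = rst a b f + rst a b g" "rst a b (f * g) = rst a b f * rst a b g"
  "rst a b (f - g) = rst a b f - rst a b g" "rst a b (- f) = - rst a b f"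
  "rst a b (f ^ n) = rst a b f ^ n" "rst a b 1 = 1" "rst a b 0 = 0" "rst a b (numeral w) = numeral w"
  "rst a b X = [:px a, px b:]" "rst a b Y = [:py a, py b:]" "rst a b Z = [:pz a, pz b:]"
  "rst a b (const3 c) = [:c:]"
  unfolding rst_def const3_def by (simp_all add: rhom_const_poly)

lemma rst_sum: "rst a b (sum f A) = (\<Sum>x\<in>A. rst a b (f x))"
  unfolding rst_def by (simp add: ev3_sum rhom_const_poly)

lemma rhom_rst: "rhom (rst a b)"
  unfolding rst_def[abs_def] by (rule rhom_ev3[OF rhom_const_poly])

lemma poly_rst: "poly (rst a b f) u = val f (lc 1 a u b)"
proof -
  have "poly (rst a b f) u = ev3 ((\<lambda>p. poly p u) \<circ> (\<lambda>c. [:c:])) (poly [:px a, px b:] u)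
      (poly [:py a, py b:] u) (poly [:pz a, pz b:] u) f"
    unfolding rst_def by (rule ev3_comm[OF rhom_const_poly rhom_poly_eval])
  also have "((\<lambda>p. poly p u) \<circ> (\<lambda>c. [:c:])) = (\<lambda>x. x)" by (simp add: o_def)
  finally show ?thesis unfolding val_def by (simp add: algebra_simps)
qed

lemma rst_0_eq: "poly (rst (0,0,0) b f) u = val f (sc u b)"
proof -
  have "lc 1 (0,0,0) u b = sc u b" by (rule pt_eqI) simp_all
  then show ?thesis by (simp add: poly_rst)
qed

lemma poly_zero_nonzero:
  fixes P :: "complex poly"
  assumes "\<And>t. t \<noteq> 0 \<Longrightarrow> poly P t = 0"
  shows "P = 0"
proof (rule ccontr)
  assume "P \<noteq> 0"
  then have "finite {x. poly P x = 0}" by (rule poly_roots_finite)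
  moreover have "UNIV - {0} \<subseteq> {x. poly P x = 0}" using assms by auto
  ultimately have "finite (UNIV - {0::complex})" by (rule rev_finite_subset)
  then show False by (simp add: infinite_UNIV_char_0)
qed

lemma poly_zero_cofinite:
  fixes P :: "complex poly"
  assumes "finite S" "\<And>t. t \<notin> S \<Longrightarrow> poly P t = 0"
  shows "P = 0"
proof (rule ccontr)
  assume "P \<noteq> 0"
  then have "finite {x. poly P x = 0}" by (rule poly_roots_finite)
  moreover have "UNIV - S \<subseteq> {x. poly P x = 0}" using assms by auto
  ultimately have "finite (UNIV - S)" by (rule rev_finite_subset)
  then show False using assms(1) by (simp add: infinite_UNIV_char_0 Diff_infinite_finite)
qed

lemma poly_nonzero_exists:
  fixes P :: "complex poly"
  assumes "P \<noteq> 0"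
  shows "\<exists>t. t \<noteq> 0 \<and> poly P t \<noteq> 0"
  using poly_zero_nonzero assms by blast

lemma poly_eq_nonzero:
  fixes P Q :: "complex poly"
  assumes "\<And>t. t \<noteq> 0 \<Longrightarrow> poly P t = poly Q t"
  shows "P = Q"
  using poly_zero_nonzero[of "P - Q"] assms by auto

definition ev2 :: "complex \<Rightarrow> complex \<Rightarrow> complex poly poly \<Rightarrow> complex" where
  "ev2 x y q = poly (map_poly (\<lambda>p. poly p x) q) y"

lemma rhom_ev2: "rhom (ev2 x y)"
  unfolding ev2_def[abs_def] by (rule rhom_compose_eval[OF rhom_poly_eval])

lemma val_ev2: "val f v = poly (map_poly (ev2 (px v) (py v)) f) (pz v)"
  unfolding val_def ev3_def ev2_def by simp

lemma ev2_zero: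
  assumes "\<And>x y. ev2 x y q = 0" shows "q = 0"
proof -
  have "map_poly (\<lambda>p. poly p x) q = 0" for x
    using assms unfolding ev2_def by (simp add: poly_all_0_iff_0[symmetric])
  then have "poly (coeff q j) x = 0" for j x
    by (metis coeff_0 coeff_map_poly poly_0)
  then have "coeff q j = 0" for j using poly_all_0_iff_0 by blast
  then show ?thesis by (simp add: poly_eq_iff)
qed

lemma val_zero:
  assumes "\<And>v. val f v = 0" shows "f = 0"
proof -
  have "map_poly (ev2 x y) f = 0" for x y
    using assms[of "(x, y, _)"] by (simp add: val_ev2 poly_all_0_iff_0[symmetric])
  then have "ev2 x y (coeff f k) = 0" for k x y
    by (metis coeff_0 coeff_map_poly rhomD(1)[OF rhom_ev2])
  then show ?thesis using ev2_zero by (simp add: poly_eq_iff)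
qed

lemma val_eqI: "(\<And>v. val f v = val g v) \<Longrightarrow> f = g"
  using val_zero[of "f - g"] by auto

definition bnd :: "cpoly3 \<Rightarrow> nat \<Rightarrow> bool" where
  "bnd f N \<longleftrightarrow> degree f \<le> N \<and> (\<forall>k. degree (coeff f k) \<le> N) \<and> (\<forall>k j. degree (coeff (coeff f k) j) \<le> N)"

lemma bnd_exists: "\<exists>N. bnd f N"
proof -
  define A where "A = Max ((\<lambda>k. degree (coeff f k)) ` {..degree f})"
  define B where "B = Max ((\<lambda>(k, j). degree (coeff (coeff f k) j)) ` ({..degree f} \<times> {..A}))"
  have a: "degree (coeff f k) \<le> A" for k
    by (cases "k \<le> degree f") (auto simp: A_def coeff_eq_0)
  have b: "degree (coeff (coeff f k) j) \<le> B" for k j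
  proof (cases "k \<le> degree f \<and> j \<le> A")
    case True then show ?thesis unfolding B_def by (intro Max_ge) auto
  next
    case False
    show ?thesis
    proof (cases "k \<le> degree f")
      case False then show ?thesis by (simp add: coeff_eq_0)
    next
      case True
      with \<open>\<not> (k \<le> degree f \<and> j \<le> A)\<close> have "j > degree (coeff f k)" using a[of k] by simp
      then show ?thesis by (simp add: coeff_eq_0)
    qed
  qed
  show ?thesis using a b unfolding bnd_def
    by (intro exI[of _ "degree f + A + B"]) (metis add.commute le_add2 le_trans trans_le_add1)
qed

lemma bnd_mono: "bnd f N \<Longrightarrow> N \<le> M \<Longrightarrow> bnd f M"
  unfolding bnd_def by (auto intro: le_trans)

lemma poly_sumN: fixes p :: "complex poly" assumes "degree p \<le> N" shows "poly p x = (\<Sum>i\<le>N. coeff p i * x ^ i)"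
  unfolding poly_altdef
  by (rule sum.mono_neutral_left) (use assms in \<open>auto simp: coeff_eq_0\<close>)

definition mono3 :: "nat \<Rightarrow> nat \<Rightarrow> nat \<Rightarrow> cpoly3" where
  "mono3 i j k = X ^ i * Y ^ j * Z ^ k"

definition box :: "nat \<Rightarrow> (nat \<times> nat \<times> nat) set" where
  "box N = {..N} \<times> {..N} \<times> {..N}"

lemma finite_box[simp]: "finite (box N)" unfolding box_def by simp

lemma tsum: fixes c :: "nat \<Rightarrow> nat \<Rightarrow> nat \<Rightarrow> complex"
  shows "(\<Sum>k\<le>N. (\<Sum>j\<le>N. (\<Sum>i\<le>N. c i j k * x ^ i) * y ^ j) * z ^ k)
     = (\<Sum>(i,j,k)\<in>box N. c i j k * x ^ i * y ^ j * z ^ k)"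
proof -
  have "(\<Sum>k\<le>N. (\<Sum>j\<le>N. (\<Sum>i\<le>N. c i j k * x ^ i) * y ^ j) * z ^ k)
      = (\<Sum>k\<le>N. \<Sum>j\<le>N. \<Sum>i\<le>N. c i j k * x ^ i * y ^ j * z ^ k)"
    by (simp add: sum_distrib_right)
  also have "\<dots> = (\<Sum>k\<le>N. \<Sum>i\<le>N. \<Sum>j\<le>N. c i j k * x ^ i * y ^ j * z ^ k)"
    by (intro sum.cong refl sum.swap)
  also have "\<dots> = (\<Sum>i\<le>N. \<Sum>k\<le>N. \<Sum>j\<le>N. c i j k * x ^ i * y ^ j * z ^ k)"
    by (rule sum.swap)
  also have "\<dots> = (\<Sum>i\<le>N. \<Sum>j\<le>N. \<Sum>k\<le>N. c i j k * x ^ i * y ^ j * z ^ k)"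
    by (intro sum.cong refl sum.swap)
  also have "\<dots> = (\<Sum>(i,j,k)\<in>box N. c i j k * x ^ i * y ^ j * z ^ k)"
    unfolding box_def by (simp add: sum.cartesian_product)
  finally show ?thesis .
qed

lemma val_expand:
  assumes "bnd f N"
  shows "val f v = (\<Sum>(i,j,k)\<in>box N. coeff3 f i j k * px v ^ i * py v ^ j * pz v ^ k)"
proof -
  have "val f v = (\<Sum>k\<le>N. ev2 (px v) (py v) (coeff f k) * pz v ^ k)"
    unfolding val_ev2 using assms unfolding bnd_def
    by (subst poly_sumN[of _ N]) (auto intro: le_trans[OF map_poly_degree_leq] simp: coeff_map_poly rhomD(1)[OF rhom_ev2])
  also have "\<dots> = (\<Sum>k\<le>N. (\<Sum>j\<le>N. (\<Sum>i\<le>N. coeff3 f i j k * px v ^ i) * py v ^ j) * pz v ^ k)"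
  proof (intro sum.cong refl arg_cong2[where f = "(*)"])
    fix k
    have d1: "degree (map_poly (\<lambda>p. poly p (px v)) (coeff f k)) \<le> N"
      using assms unfolding bnd_def by (auto intro: le_trans[OF map_poly_degree_leq])
    show "ev2 (px v) (py v) (coeff f k) = (\<Sum>j\<le>N. (\<Sum>i\<le>N. coeff3 f i j k * px v ^ i) * py v ^ j)"
      unfolding ev2_def
      apply (subst poly_sumN[OF d1])
      apply (intro sum.cong refl)
      apply (subst coeff_map_poly, simp)
      apply (subst poly_sumN[of _ N])
      using assms unfolding bnd_def coeff3_def by auto
  qed
  also have "\<dots> = (\<Sum>(i,j,k)\<in>box N. coeff3 f i j k * px v ^ i * py v ^ j * pz v ^ k)"
    by (rule tsum)
  finally show ?thesis .
qed

lemma expand3: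
  assumes "bnd f N"
  shows "f = (\<Sum>(i,j,k)\<in>box N. const3 (coeff3 f i j k) * mono3 i j k)"
proof (rule val_eqI)
  fix v
  show "val f v = val (\<Sum>(i,j,k)\<in>box N. const3 (coeff3 f i j k) * mono3 i j k) v"
    unfolding val_expand[OF assms] val_sum
    by (intro sum.cong refl) (auto simp: mono3_def mult_ac)
qed




definition g1 :: cpoly3 where "g1 = Y * Z * (Y - Z)"
definition g2 :: cpoly3 where "g2 = Z * X * (Z - X)"
definition g3 :: cpoly3 where "g3 = X * Y * (X - Y)"

lemma Jideal_gens: "Jideal = ideal_gen {g1, g2, g3}"
  unfolding Jideal_def g1_def g2_def g3_def ..

lemma J_ideal: "is_ideal Jideal" unfolding Jideal_def by (rule ideal_gen_ideal)

lemma g_in_J: "g1 \<in> Jideal" "g2 \<in> Jideal" "g3 \<in> Jideal"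
  unfolding Jideal_gens using ideal_gen_sub[of "{g1, g2, g3}"] by auto

definition Pt :: "nat \<Rightarrow> pt" where
  "Pt i = (if i = 0 then (1,0,0) else if i = 1 then (0,1,0) else if i = 2 then (0,0,1)
     else if i = 3 then (1,1,1) else if i = 4 then (0,1,1) else if i = 5 then (1,0,1) else (1,1,0))"

lemma Pt_simps[simp]: "Pt 0 = (1,0,0)" "Pt 1 = (0,1,0)" "Pt 2 = (0,0,1)" "Pt 3 = (1,1,1)"
  "Pt 4 = (0,1,1)" "Pt 5 = (1,0,1)" "Pt 6 = (1,1,0)"
  by (simp_all add: Pt_def)

lemma Pt_simps2[simp]: "Pt (Suc 0) = (0,1,0)" "Pt (Suc (Suc 0)) = (0,0,1)"
  by (simp_all add: Pt_def)

lemma less7_cases: "(i::nat) < 7 \<Longrightarrow> i = 0 \<or> i = 1 \<or> i = 2 \<or> i = 3 \<or> i = 4 \<or> i = 5 \<or> i = 6"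
  by auto

definition Vset :: "cpoly3 set" where
  "Vset = {f. \<forall>i<7. \<forall>t. val f (sc t (Pt i)) = 0}"

lemma V_ideal: "is_ideal Vset"
  unfolding is_ideal_def Vset_def by auto

lemma J_sub_V: "Jideal \<subseteq> Vset"
proof -
  have "g \<in> Vset" if g: "g \<in> {g1, g2, g3}" for g
    unfolding Vset_def
  proof (intro CollectI allI impI)
    fix i t assume "(i::nat) < 7"
    then show "val g (sc t (Pt i)) = 0"
      using g unfolding g1_def g2_def g3_def
      by (elim less7_cases[elim_format] disjE insertE emptyE) simp_all
  qed
  then have "{g1, g2, g3} \<subseteq> Vset" by blast
  then show ?thesis unfolding Jideal_gens by (rule ideal_gen_least[OF V_ideal])
qed

definition cg :: "cpoly3 \<Rightarrow> cpoly3 \<Rightarrow> bool" where "cg a b \<longleftrightarrow> a - b \<in> Jideal"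

lemma cg_refl: "cg a a" unfolding cg_def using ideal_0[OF J_ideal] by simp
lemma cg_trans: "cg a b \<Longrightarrow> cg b c \<Longrightarrow> cg a c"
  unfolding cg_def using ideal_add[OF J_ideal, of "a - b" "b - c"] by simp

lemma cgX: "cg (mono3 (Suc i) (j + 1) k) (mono3 (Suc i + j) 1 k)"
proof (induction j arbitrary: i)
  case 0 then show ?case by (simp add: cg_refl)
next
  case (Suc j)
  have eq: "mono3 (Suc i) (Suc j + 1) k - mono3 (Suc (Suc i)) (j + 1) k = (- (X ^ i * Y ^ j * Z ^ k)) * g3"
    unfolding mono3_def g3_def by (simp add: algebra_simps)
  have 1: "cg (mono3 (Suc i) (Suc j + 1) k) (mono3 (Suc (Suc i)) (j + 1) k)"
    unfolding cg_def by (subst eq) (rule ideal_mult[OF J_ideal g_in_J(3)])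
  have 2: "cg (mono3 (Suc (Suc i)) (j + 1) k) (mono3 (Suc (Suc i) + j) 1 k)" by (rule Suc.IH)
  have "Suc (Suc i) + j = Suc i + Suc j" by simp
  then show ?case using cg_trans[OF 1 2] by simp
qed

lemma cgZ: "cg (mono3 (Suc i) j (k + 1)) (mono3 (Suc i + k) j 1)"
proof (induction k arbitrary: i)
  case 0 then show ?case by (simp add: cg_refl)
next
  case (Suc k)
  have eq: "mono3 (Suc i) j (Suc k + 1) - mono3 (Suc (Suc i)) j (k + 1) = (X ^ i * Y ^ j * Z ^ k) * g2"
    unfolding mono3_def g2_def by (simp add: algebra_simps)
  have 1: "cg (mono3 (Suc i) j (Suc k + 1)) (mono3 (Suc (Suc i)) j (k + 1))"
    unfolding cg_def by (subst eq) (rule ideal_mult[OF J_ideal g_in_J(2)])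
  have 2: "cg (mono3 (Suc (Suc i)) j (k + 1)) (mono3 (Suc (Suc i) + k) j 1)" by (rule Suc.IH)
  have "Suc (Suc i) + k = Suc i + Suc k" by simp
  then show ?case using cg_trans[OF 1 2] by simp
qed

lemma cgYZ: "cg (mono3 0 (Suc j) (k + 1)) (mono3 0 (Suc j + k) 1)"
proof (induction k arbitrary: j)
  case 0 then show ?case by (simp add: cg_refl)
next
  case (Suc k)
  have eq: "mono3 0 (Suc j) (Suc k + 1) - mono3 0 (Suc (Suc j)) (k + 1) = (- (Y ^ j * Z ^ k)) * g1"
    unfolding mono3_def g1_def by (simp add: algebra_simps)
  have 1: "cg (mono3 0 (Suc j) (Suc k + 1)) (mono3 0 (Suc (Suc j)) (k + 1))"
    unfolding cg_def by (subst eq) (rule ideal_mult[OF J_ideal g_in_J(1)])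
  have 2: "cg (mono3 0 (Suc (Suc j)) (k + 1)) (mono3 0 (Suc (Suc j) + k) 1)" by (rule Suc.IH)
  have "Suc (Suc j) + k = Suc j + Suc k" by simp
  then show ?case using cg_trans[OF 1 2] by simp
qed

definition rep :: "nat \<times> nat \<times> nat \<Rightarrow> nat \<times> nat \<times> nat" where
  "rep m = (case m of (i, j, k) \<Rightarrow>
     if i > 0 then (i + j + k - min j 1 - min k 1, min j 1, min k 1)
     else if j > 0 then (0, j + k - min k 1, min k 1) else (0, 0, k))"

definition deg3 :: "nat \<times> nat \<times> nat \<Rightarrow> nat" where "deg3 m = (case m of (i,j,k) \<Rightarrow> i + j + k)"
definition sp3 :: "nat \<times> nat \<times> nat \<Rightarrow> bool \<times> bool \<times> bool" where
  "sp3 m = (case m of (i,j,k) \<Rightarrow> (0 < i, 0 < j, 0 < k))"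

lemma rep_eq_iff: "rep m = rep m' \<longleftrightarrow> deg3 m = deg3 m' \<and> sp3 m = sp3 m'"
  by (cases m; cases m') (auto simp: rep_def deg3_def sp3_def split: if_splits)

lemma rep_idem: "rep (rep m) = rep m"
  by (cases m) (auto simp: rep_def split: if_splits)

lemma cg_rep: "cg (case m of (i,j,k) \<Rightarrow> mono3 i j k) (case rep m of (i,j,k) \<Rightarrow> mono3 i j k)"
proof (cases m)
  case (fields i j k)
  show ?thesis
  proof (cases "i > 0")
    case True
    then obtain i' where i: "i = Suc i'" by (cases i) auto
    have s1: "cg (mono3 i j k) (mono3 (i + j - min j 1) (min j 1) k)"
    proof (cases j)
      case 0 then show ?thesis by (simp add: cg_refl)
    next
      case (Suc j') then show ?thesis using cgX[of i' j' k] i by simp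
    qed
    have s2: "cg (mono3 (i + j - min j 1) (min j 1) k) (mono3 (i + j + k - min j 1 - min k 1) (min j 1) (min k 1))"
    proof (cases k)
      case 0 then show ?thesis by (simp add: cg_refl)
    next
      case (Suc k')
      obtain a where a: "i + j - min j 1 = Suc a" using i by (cases j) auto
      have "i + j + k - min j 1 - min k 1 = Suc a + k'" using a Suc by (cases j) auto
      then show ?thesis using cgZ[of a "min j 1" k'] a Suc by simp
    qed
    show ?thesis using cg_trans[OF s1 s2] True fields by (simp add: rep_def)
  next
    case False
    then have i0: "i = 0" by simp
    show ?thesis
    proof (cases "j > 0")
      case True
      then obtain j' where j: "j = Suc j'" by (cases j) auto
      show ?thesis
      proof (cases k)
        case 0 then show ?thesis using fields i0 j by (simp add: rep_def cg_refl)
      next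
        case (Suc k')
        then show ?thesis using fields i0 j cgYZ[of j' k'] by (simp add: rep_def)
      qed
    next
      case False then show ?thesis using fields i0 by (simp add: rep_def cg_refl)
    qed
  qed
qed


section \<open>Vanishing ideal equals J\<close>

definition cf :: "cpoly3 \<Rightarrow> nat \<times> nat \<times> nat \<Rightarrow> complex" where
  "cf f m = (case m of (i,j,k) \<Rightarrow> coeff3 f i j k)"

definition mn :: "nat \<times> nat \<times> nat \<Rightarrow> cpoly3" where
  "mn m = (case m of (i,j,k) \<Rightarrow> mono3 i j k)"

lemma expand3': "bnd f N \<Longrightarrow> f = (\<Sum>m\<in>box N. const3 (cf f m) * mn m)"
  using expand3[of f N] by (simp add: cf_def mn_def case_prod_beta)

lemma monom_lin: "[:0, a:] = monom a 1"
  by (simp add: monom_Suc monom_0)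

lemma rst_mn: "rst (0,0,0) p (const3 c * mn m) = monom (c * px p ^ fst m * py p ^ fst (snd m) * pz p ^ snd (snd m)) (deg3 m)"
proof (cases m)
  case (fields i j k)
  have "rst (0,0,0) p (const3 c * mn m) = [:c:] * [:0, px p:] ^ i * [:0, py p:] ^ j * [:0, pz p:] ^ k"
    using fields by (simp add: mn_def mono3_def mult_ac)
  also have "\<dots> = monom c 0 * monom (px p) 1 ^ i * monom (py p) 1 ^ j * monom (pz p) 1 ^ k"
    by (simp only: monom_0 monom_lin)
  also have "\<dots> = monom (c * px p ^ i * py p ^ j * pz p ^ k) (i + j + k)"
    by (simp only: monom_power mult_monom) simp
  finally show ?thesis using fields by (simp add: deg3_def)
qed

definition wt :: "pt \<Rightarrow> nat \<Rightarrow> cpoly3 \<Rightarrow> nat \<times> nat \<times> nat \<Rightarrow> complex" where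
  "wt p e f m = (if deg3 m = e then cf f m * px p ^ fst m * py p ^ fst (snd m) * pz p ^ snd (snd m) else 0)"

lemma E_zero:
  assumes f: "f \<in> Vset" and N: "bnd f N" and t: "t < 7"
  shows "(\<Sum>m\<in>box N. wt (Pt t) e f m) = 0"
proof -
  have "poly (rst (0,0,0) (Pt t) f) u = 0" for u
    using f t unfolding Vset_def by (simp add: rst_0_eq)
  then have z: "rst (0,0,0) (Pt t) f = 0" by (simp add: poly_all_0_iff_0[symmetric])
  have "rst (0,0,0) (Pt t) f = (\<Sum>m\<in>box N. rst (0,0,0) (Pt t) (const3 (cf f m) * mn m))"
    by (subst expand3'[OF N]) (simp add: rst_sum)
  then have "0 = coeff (\<Sum>m\<in>box N. rst (0,0,0) (Pt t) (const3 (cf f m) * mn m)) e"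
    using z by simp
  also have "\<dots> = (\<Sum>m\<in>box N. wt (Pt t) e f m)"
    unfolding coeff_sum rst_mn by (intro sum.cong refl) (auto simp: wt_def)
  finally show ?thesis by simp
qed

definition Dv :: "bool \<times> bool \<times> bool \<Rightarrow> nat \<Rightarrow> cpoly3 \<Rightarrow> nat \<times> nat \<times> nat \<Rightarrow> complex" where
  "Dv S e f m = (if deg3 m = e \<and> sp3 m = S then cf f m else 0)"

lemma Dv_zero:
  assumes f: "f \<in> Vset" and N: "bnd f N"
  shows "(\<Sum>m\<in>box N. Dv S e f m) = 0"
proof -
  let ?w = "\<lambda>p. \<Sum>m\<in>box N. wt p e f m"
  have E: "?w (1,0,0) = 0" "?w (0,1,0) = 0" "?w (0,0,1) = 0" "?w (1,1,1) = 0"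
    "?w (0,1,1) = 0" "?w (1,0,1) = 0" "?w (1,1,0) = 0"
    using E_zero[OF f N, of 0 e] E_zero[OF f N, of 1 e] E_zero[OF f N, of 2 e] E_zero[OF f N, of 3 e]
      E_zero[OF f N, of 4 e] E_zero[OF f N, of 5 e] E_zero[OF f N, of 6 e] by simp_all
  let ?z = "\<lambda>m. if e = 0 then wt (1,0,0) e f m else 0"
  have z: "(\<Sum>m\<in>box N. ?z m) = 0" using E(1) by (cases "e = 0") simp_all
  obtain a b c where S: "S = (a, b, c)" by (cases S)
  show ?thesis
  proof (cases a; cases b; cases c)
    assume "a" "b" "c"
    then have "\<And>m. Dv S e f m = wt (1,1,1) e f m - wt (1,1,0) e f m - wt (1,0,1) e f m - wt (0,1,1) e f m
        + wt (1,0,0) e f m + wt (0,1,0) e f m + wt (0,0,1) e f m - ?z m"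
      using S by (auto simp: Dv_def wt_def deg3_def sp3_def power_0_left split: prod.splits)
    then show ?thesis using E z by (simp add: sum.distrib sum_subtractf)
  next
    assume "a" "b" "\<not> c"
    then have "\<And>m. Dv S e f m = wt (1,1,0) e f m - wt (1,0,0) e f m - wt (0,1,0) e f m + ?z m"
      using S by (auto simp: Dv_def wt_def deg3_def sp3_def power_0_left split: prod.splits)
    then show ?thesis using E z by (simp add: sum.distrib sum_subtractf)
  next
    assume "a" "\<not> b" "c"
    then have "\<And>m. Dv S e f m = wt (1,0,1) e f m - wt (1,0,0) e f m - wt (0,0,1) e f m + ?z m"
      using S by (auto simp: Dv_def wt_def deg3_def sp3_def power_0_left split: prod.splits)
    then show ?thesis using E z by (simp add: sum.distrib sum_subtractf)
  next
    assume "a" "\<not> b" "\<not> c"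
    then have "\<And>m. Dv S e f m = wt (1,0,0) e f m - ?z m"
      using S by (auto simp: Dv_def wt_def deg3_def sp3_def power_0_left split: prod.splits)
    then show ?thesis using E z by (simp add: sum.distrib sum_subtractf)
  next
    assume "\<not> a" "b" "c"
    then have "\<And>m. Dv S e f m = wt (0,1,1) e f m - wt (0,1,0) e f m - wt (0,0,1) e f m + ?z m"
      using S by (auto simp: Dv_def wt_def deg3_def sp3_def power_0_left split: prod.splits)
    then show ?thesis using E z by (simp add: sum.distrib sum_subtractf)
  next
    assume "\<not> a" "b" "\<not> c"
    then have "\<And>m. Dv S e f m = wt (0,1,0) e f m - ?z m"
      using S by (auto simp: Dv_def wt_def deg3_def sp3_def power_0_left split: prod.splits)
    then show ?thesis using E z by (simp add: sum.distrib sum_subtractf)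
  next
    assume "\<not> a" "\<not> b" "c"
    then have "\<And>m. Dv S e f m = wt (0,0,1) e f m - ?z m"
      using S by (auto simp: Dv_def wt_def deg3_def sp3_def power_0_left split: prod.splits)
    then show ?thesis using E z by (simp add: sum.distrib sum_subtractf)
  next
    assume "\<not> a" "\<not> b" "\<not> c"
    then have "\<And>m. Dv S e f m = ?z m"
      using S by (auto simp: Dv_def wt_def deg3_def sp3_def power_0_left split: prod.splits)
    then show ?thesis using z by simp
  qed
qed


lemma const3_mono3: "const3 c * mono3 a b d = monom (monom (monom c a) b) d"
proof -
  have X: "X = monom (monom (monom 1 1) 0) 0" unfolding X_def by (simp only: monom_0 monom_lin)
  have Y: "Y = monom (monom 1 1) 0" unfolding Y_def by (simp only: monom_0 monom_lin)
  have Z: "Z = monom 1 1" unfolding Z_def by (simp only: monom_0 monom_lin)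
  have C: "const3 c = monom (monom (monom c 0) 0) 0" unfolding const3_def by (simp only: monom_0)
  show ?thesis unfolding mono3_def X Y Z C
    by (simp only: monom_power mult_monom) (simp add: mult_monom)
qed

lemma coeff3_const3_mn: "coeff3 (const3 c * mn r) i j k = (if (i,j,k) = r then c else 0)"
  by (cases r) (simp add: mn_def const3_mono3 coeff3_def)

lemma coeff3_sum: "coeff3 (sum f A) i j k = (\<Sum>x\<in>A. coeff3 (f x) i j k)"
  unfolding coeff3_def by (simp add: coeff_sum)

lemma coeff3_eqI: "(\<And>i j k. coeff3 f i j k = coeff3 g i j k) \<Longrightarrow> f = g"
  unfolding coeff3_def by (intro poly_eqI) blast

lemma V_sub_J: "Vset \<subseteq> Jideal"
proof
  fix f assume f: "f \<in> Vset"
  obtain N where N: "bnd f N" using bnd_exists by blast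
  define h where "h = (\<Sum>m\<in>box N. const3 (cf f m) * mn (rep m))"
  have "f - h = (\<Sum>m\<in>box N. const3 (cf f m) * (mn m - mn (rep m)))"
    unfolding h_def by (subst expand3'[OF N]) (simp add: sum_subtractf right_diff_distrib)
  also have "\<dots> \<in> Jideal"
  proof (rule ideal_sum[OF J_ideal])
    fix m
    have "mn m - mn (rep m) \<in> Jideal" using cg_rep[of m] unfolding cg_def mn_def .
    then show "const3 (cf f m) * (mn m - mn (rep m)) \<in> Jideal" by (rule ideal_mult[OF J_ideal])
  qed
  finally have fh: "f - h \<in> Jideal" .
  have "h = 0"
  proof (rule coeff3_eqI)
    fix i j k
    have "coeff3 h i j k = (\<Sum>m\<in>box N. if (i,j,k) = rep m then cf f m else 0)"
      unfolding h_def coeff3_sum coeff3_const3_mn ..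
    also have "\<dots> = 0"
    proof (cases "\<exists>m. rep m = (i,j,k)")
      case True
      then obtain m0 where m0: "rep m0 = (i,j,k)" by blast
      have rr: "rep (i,j,k) = (i,j,k)" using rep_idem[of m0] m0 by simp
      have "(\<Sum>m\<in>box N. if (i,j,k) = rep m then cf f m else 0) = (\<Sum>m\<in>box N. Dv (sp3 (i,j,k)) (deg3 (i,j,k)) f m)"
      proof (intro sum.cong refl)
        fix m
        have "((i,j,k) = rep m) = (rep m = rep (i,j,k))" using rr by auto
        also have "\<dots> = (deg3 m = deg3 (i,j,k) \<and> sp3 m = sp3 (i,j,k))" by (rule rep_eq_iff)
        finally show "(if (i,j,k) = rep m then cf f m else 0) = Dv (sp3 (i,j,k)) (deg3 (i,j,k)) f m"
          unfolding Dv_def by simp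
      qed
      also have "\<dots> = 0" by (rule Dv_zero[OF f N])
      finally show ?thesis .
    next
      case False
      then have "(i,j,k) \<noteq> rep m" for m by metis
      then show ?thesis by (intro sum.neutral) simp
    qed
    finally show "coeff3 h i j k = coeff3 0 i j k" by (simp add: coeff3_def)
  qed
  then show "f \<in> Jideal" using fh by simp
qed

lemma J_eq_V: "Jideal = Vset" using J_sub_V V_sub_J by blast




section \<open>Line primes are associated\<close>

definition Ip :: "nat \<Rightarrow> cpoly3 set" where
  "Ip t = {s. rst (0,0,0) (Pt t) s = 0}"

lemma Ip_iff: "s \<in> Ip t \<longleftrightarrow> (\<forall>u. val s (sc u (Pt t)) = 0)"
  unfolding Ip_def by (simp add: poly_all_0_iff_0[symmetric] rst_0_eq)

lemma Ip_prime: "is_prime_ideal (Ip t)"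
proof -
  have "1 \<notin> Ip t" by (simp add: Ip_def)
  then have "Ip t \<noteq> UNIV" by blast
  moreover have "is_ideal (Ip t)" unfolding is_ideal_def by (auto simp: Ip_def)
  moreover have "\<forall>a b. a * b \<in> Ip t \<longrightarrow> a \<in> Ip t \<or> b \<in> Ip t" by (auto simp: Ip_def)
  ultimately show ?thesis unfolding is_prime_ideal_def by blast
qed

definition gp :: "nat \<Rightarrow> cpoly3" where
  "gp t = (if t = 0 then X * (X - Y) * (X - Z) else if t = 1 then Y * (Y - X) * (Y - Z)
    else if t = 2 then Z * (Z - X) * (Z - Y) else if t = 3 then X * Y * Z
    else if t = 4 then Y * Z * (X - Y) else if t = 5 then X * Z * (Y - Z) else X * Y * (X - Z))"

lemma gp_other: "t < 7 \<Longrightarrow> t' < 7 \<Longrightarrow> t' \<noteq> t \<Longrightarrow> val (gp t) (sc u (Pt t')) = 0"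
  unfolding gp_def
  by (elim less7_cases[elim_format] disjE) simp_all

lemma gp_self: "t < 7 \<Longrightarrow> u \<noteq> 0 \<Longrightarrow> val (gp t) (sc u (Pt t)) \<noteq> 0"
  unfolding gp_def
  by (elim less7_cases[elim_format] disjE) simp_all

lemma Ip_colon: assumes t: "t < 7" shows "Ip t = {g. g * gp t \<in> Jideal}"
proof
  show "Ip t \<subseteq> {g. g * gp t \<in> Jideal}"
  proof
    fix s assume s: "s \<in> Ip t"
    have "s * gp t \<in> Vset" unfolding Vset_def
    proof (intro CollectI allI impI)
      fix t' :: nat and u assume t': "t' < 7"
      show "val (s * gp t) (sc u (Pt t')) = 0"
      proof (cases "t' = t")
        case True then show ?thesis using s by (simp add: Ip_iff)
      next
        case False then show ?thesis using gp_other[OF t t' False] by simp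
      qed
    qed
    then show "s \<in> {g. g * gp t \<in> Jideal}" using J_eq_V by simp
  qed
next
  show "{g. g * gp t \<in> Jideal} \<subseteq> Ip t"
  proof
    fix s assume "s \<in> {g. g * gp t \<in> Jideal}"
    then have "s * gp t \<in> Vset" using J_eq_V by simp
    then have "val s (sc u (Pt t)) * val (gp t) (sc u (Pt t)) = 0" for u
      using t unfolding Vset_def by simp
    then have "val s (sc u (Pt t)) = 0" if "u \<noteq> 0" for u using gp_self[OF t that] by (metis mult_eq_0_iff)
    then have "rst (0,0,0) (Pt t) s = 0" by (intro poly_zero_nonzero) (simp add: rst_0_eq)
    then show "s \<in> Ip t" by (simp add: Ip_def)
  qed
qed

lemma Ip_ass: "t < 7 \<Longrightarrow> Ip t \<in> ass Jideal"
  unfolding ass_def using Ip_prime Ip_colon by blast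

definition ell :: cpoly3 where "ell = X + Y + Z"

lemma ell_notin_ass: assumes P: "P \<in> ass Jideal" shows "ell ^ n \<notin> P"
proof -
  from P obtain f where Pp: "is_prime_ideal P" and Pf: "P = {g. g * f \<in> Jideal}"
    unfolding ass_def by blast
  have "ell \<notin> P"
  proof
    assume "ell \<in> P"
    then have "ell * f \<in> Vset" using Pf J_eq_V by simp
    then have ef: "val ell (sc u (Pt t)) * val f (sc u (Pt t)) = 0" if "t < 7" for u and t :: nat
      using that unfolding Vset_def by simp
    have "f \<in> Vset" unfolding Vset_def
    proof (intro CollectI allI impI)
      fix t :: nat and u assume t: "t < 7"
      have "val ell (sc u (Pt t)) \<noteq> 0" if "u \<noteq> 0" for u
        using t that unfolding ell_def by (elim less7_cases[elim_format] disjE) simp_all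
      then have "val f (sc u (Pt t)) = 0" if "u \<noteq> 0" for u using ef[OF t, of u] that by simp
      then have "rst (0,0,0) (Pt t) f = 0" by (intro poly_zero_nonzero) (simp add: rst_0_eq)
      then show "val f (sc u (Pt t)) = 0" by (metis poly_0 rst_0_eq)
    qed
    then have "1 \<in> P" using Pf J_eq_V by simp
    then have "P = UNIV" using Pp unfolding is_prime_ideal_def using ideal_1_UNIV by blast
    then show False using Pp unfolding is_prime_ideal_def by blast
  qed
  then show ?thesis using prime_ideal_notin_power[OF Pp] by blast
qed

lemma symb_mem: assumes "ell ^ n * F \<in> ideal_pow Jideal m" shows "F \<in> symb_pow Jideal m"
  unfolding symb_pow_def using ell_notin_ass assms by blast

lemma symb_lower: assumes "f \<in> symb_pow Jideal m" "t < 7"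
  shows "\<exists>s. s \<notin> Ip t \<and> s * f \<in> ideal_pow Jideal m"
  using assms Ip_ass[OF assms(2)] unfolding symb_pow_def by blast

section \<open>Orders of vanishing\<close>

lemma lc_1_0: "lc 1 a 0 b = a" by (rule pt_eqI) simp_all

lemma poly_rst_0: "poly (rst a b f) 0 = val f a"
  by (simp add: poly_rst lc_1_0)

lemma J_ord1: assumes a: "\<And>g. g \<in> Jideal \<Longrightarrow> val g a = 0" and g: "g \<in> Jideal"
  shows "monom 1 1 dvd rst a b g"
proof -
  have "poly (rst a b g) 0 = 0" using a[OF g] by (simp add: poly_rst_0)
  then have "[:- 0, 1:] dvd rst a b g" by (simp only: poly_eq_0_iff_dvd)
  then show ?thesis by (simp add: monom_Suc monom_0)
qed

lemma pow_ord:
  assumes a: "\<And>g. g \<in> Jideal \<Longrightarrow> val g a = 0" and f: "f \<in> ideal_pow Jideal m"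
  shows "monom 1 m dvd rst a b f"
proof -
  let ?K = "\<lambda>m. {f. monom 1 m dvd rst a b f}"
  have "ideal_pow Jideal m \<subseteq> ?K m"
  proof (rule ideal_pow_induct[OF J_ideal])
    fix m show "is_ideal (?K m)" unfolding is_ideal_def by auto
  next
    fix x show "x \<in> ?K 0" by (simp add: monom_0 one_pCons[symmetric])
  next
    fix m x y assume "x \<in> ?K m" "y \<in> Jideal"
    then have "monom 1 m * monom 1 1 dvd rst a b x * rst a b y"
      using J_ord1[OF a] by (intro mult_dvd_mono) auto
    then show "x * y \<in> ?K (Suc m)" by (simp add: mult_monom)
  qed
  then show ?thesis using f by blast
qed

lemma gens_vanish: "t < 7 \<Longrightarrow> g \<in> Jideal \<Longrightarrow> val g (sc u (Pt t)) = 0"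
  using J_sub_V unfolding Vset_def by blast

lemma dvd_cancel_unit0:
  fixes A B :: "complex poly"
  assumes "monom 1 m dvd A * B" "poly A 0 \<noteq> 0"
  shows "monom 1 m dvd B"
proof (cases "B = 0")
  case True then show ?thesis by simp
next
  case False
  have A: "A \<noteq> 0" using assms(2) by auto
  have o: "order 0 A = 0" using assms(2) order_root by blast
  have "m \<le> order 0 (A * B)" using assms(1) A False by (simp add: monom_1_dvd_iff)
  also have "\<dots> = order 0 B" using A False o by (simp add: order_mult)
  finally show ?thesis using False by (simp add: monom_1_dvd_iff)
qed

definition FH :: "cpoly3 \<Rightarrow> nat \<Rightarrow> bool" where
  "FH f d \<longleftrightarrow> (\<forall>c v. c \<noteq> 0 \<longrightarrow> val f (sc c v) = c ^ d * val f v)"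

definition mult_ge :: "cpoly3 \<Rightarrow> pt \<Rightarrow> nat \<Rightarrow> bool" where
  "mult_ge f p m \<longleftrightarrow> (\<forall>k b. k \<noteq> 0 \<longrightarrow> monom 1 m dvd rst (sc k p) b f)"

lemma rst_scale:
  assumes FH: "FH f d" and k: "k \<noteq> 0" and mu: "\<mu> \<noteq> 0"
  shows "rst (sc k p) b f = smult ((k / \<mu>) ^ d) (rst (sc \<mu> p) (sc (\<mu> / k) b) f)"
proof (rule poly_eq_nonzero)
  fix u :: complex
  have pt: "lc 1 (sc k p) u b = sc (k / \<mu>) (lc 1 (sc \<mu> p) u (sc (\<mu> / k) b))"
    using k mu by (intro pt_eqI) (simp_all add: field_simps)
  have "k / \<mu> \<noteq> 0" using k mu by simp
  then have "val f (sc (k / \<mu>) (lc 1 (sc \<mu> p) u (sc (\<mu> / k) b))) = (k / \<mu>) ^ d * val f (lc 1 (sc \<mu> p) u (sc (\<mu> / k) b))"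
    using FH unfolding FH_def by blast
  then show "poly (rst (sc k p) b f) u = poly (smult ((k / \<mu>) ^ d) (rst (sc \<mu> p) (sc (\<mu> / k) b) f)) u"
    by (simp add: poly_rst pt)
qed

lemma symb_mult_ge:
  assumes f: "f \<in> symb_pow Jideal m" and FH: "FH f d" and t: "t < 7"
  shows "mult_ge f (Pt t) m"
proof -
  obtain s where s: "s \<notin> Ip t" "s * f \<in> ideal_pow Jideal m" using symb_lower[OF f t] by blast
  then have "rst (0,0,0) (Pt t) s \<noteq> 0" unfolding Ip_def by simp
  then obtain \<mu> where mu: "\<mu> \<noteq> 0" "poly (rst (0,0,0) (Pt t) s) \<mu> \<noteq> 0" using poly_nonzero_exists by blast
  then have vs: "val s (sc \<mu> (Pt t)) \<noteq> 0" by (simp add: rst_0_eq)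
  have a: "\<And>g. g \<in> Jideal \<Longrightarrow> val g (sc \<mu> (Pt t)) = 0" using gens_vanish[OF t] by blast
  have base: "monom 1 m dvd rst (sc \<mu> (Pt t)) b f" for b
  proof -
    have "monom 1 m dvd rst (sc \<mu> (Pt t)) b s * rst (sc \<mu> (Pt t)) b f"
      using pow_ord[OF a s(2), of b] by simp
    moreover have "poly (rst (sc \<mu> (Pt t)) b s) 0 \<noteq> 0" using vs by (simp add: poly_rst_0)
    ultimately show ?thesis by (rule dvd_cancel_unit0)
  qed
  show ?thesis unfolding mult_ge_def
  proof (intro allI impI)
    fix k b assume k: "(k::complex) \<noteq> 0"
    show "monom 1 m dvd rst (sc k (Pt t)) b f"
      unfolding rst_scale[OF FH k mu(1)] using base by (rule dvd_smult)
  qed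
qed

lemma homog_FH: assumes h: "homog_of_deg f d" shows "FH f d"
  unfolding FH_def
proof (intro allI impI)
  fix c v assume c: "(c::complex) \<noteq> 0"
  obtain N where N: "bnd f N" using bnd_exists by blast
  show "val f (sc c v) = c ^ d * val f v"
    unfolding val_expand[OF N] sum_distrib_left
  proof (intro sum.cong refl, clarify)
    fix i j k
    show "coeff3 f i j k * px (sc c v) ^ i * py (sc c v) ^ j * pz (sc c v) ^ k =
        c ^ d * (coeff3 f i j k * px v ^ i * py v ^ j * pz v ^ k)"
    proof (cases "coeff3 f i j k = 0")
      case True then show ?thesis by simp
    next
      case False
      then have "i + j + k = d" using h unfolding homog_of_deg_def by blast
      then show ?thesis by (auto simp: power_mult_distrib power_add mult_ac)
    qed
  qed
qed

definition lf :: "complex \<Rightarrow> complex \<Rightarrow> complex \<Rightarrow> cpoly3" where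
  "lf a b c = const3 a * X + const3 b * Y + const3 c * Z"

definition lv :: "complex \<Rightarrow> complex \<Rightarrow> complex \<Rightarrow> pt \<Rightarrow> complex" where
  "lv a b c v = a * px v + b * py v + c * pz v"

lemma val_lf[simp]: "val (lf a b c) v = lv a b c v" unfolding lf_def lv_def by simp
lemma rst_lf[simp]: "rst p q (lf a b c) = [:lv a b c p, lv a b c q:]"
  unfolding lf_def lv_def by simp
lemma lv_sc[simp]: "lv a b c (sc k v) = k * lv a b c v" unfolding lv_def by (simp add: algebra_simps)
lemma lv_lc[simp]: "lv a b c (lc s v t w) = s * lv a b c v + t * lv a b c w" unfolding lv_def by (simp add: algebra_simps)

lemma lv_witness: "(a, b, c) \<noteq> (0, 0, 0) \<Longrightarrow> \<exists>w. lv a b c w \<noteq> 0"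
proof -
  assume "(a, b, c) \<noteq> (0, 0, 0)"
  then have "lv a b c (1,0,0) \<noteq> 0 \<or> lv a b c (0,1,0) \<noteq> 0 \<or> lv a b c (0,0,1) \<noteq> 0" unfolding lv_def by auto
  then show ?thesis by blast
qed

definition rst2 :: "pt \<Rightarrow> pt \<Rightarrow> pt \<Rightarrow> cpoly3 \<Rightarrow> complex poly poly" where
  "rst2 a b w f = ev3 (\<lambda>c. [:[:c:]:]) [:[:px a:], [:px b, px w:]:] [:[:py a:], [:py b, py w:]:] [:[:pz a:], [:pz b, pz w:]:] f"

lemma rhom_cc: "rhom (\<lambda>c::complex. [:[:c:]:])" unfolding rhom_def by (simp add: one_pCons)

lemma rst2_spec: "map_poly (\<lambda>q. poly q t) (rst2 a b w f) = rst a (lc 1 b t w) f"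
proof -
  have r: "rhom (map_poly (\<lambda>q. poly q t))" by (rule rhom_map_poly[OF rhom_poly_eval])
  have "map_poly (\<lambda>q. poly q t) (rst2 a b w f) =
     ev3 (map_poly (\<lambda>q. poly q t) \<circ> (\<lambda>c. [:[:c:]:])) (map_poly (\<lambda>q. poly q t) [:[:px a:], [:px b, px w:]:])
       (map_poly (\<lambda>q. poly q t) [:[:py a:], [:py b, py w:]:]) (map_poly (\<lambda>q. poly q t) [:[:pz a:], [:pz b, pz w:]:]) f"
    unfolding rst2_def by (rule ev3_comm[OF rhom_cc r])
  also have "(map_poly (\<lambda>q. poly q t) \<circ> (\<lambda>c. [:[:c:]:])) = (\<lambda>c. [:c:])"
    by (auto simp: o_def map_poly_pCons)
  finally show ?thesis unfolding rst_def by (simp add: map_poly_pCons algebra_simps)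
qed

lemma dir_dense:
  assumes "\<And>t. t \<noteq> 0 \<Longrightarrow> monom 1 n dvd rst a (lc 1 b t w) f"
  shows "monom 1 n dvd rst a b f"
proof -
  have c: "coeff (rst a (lc 1 b t w) f) k = poly (coeff (rst2 a b w f) k) t" for t k
    by (simp add: rst2_spec[symmetric] coeff_map_poly)
  have "coeff (rst2 a b w f) k = 0" if k: "k < n" for k
    using assms k by (intro poly_zero_nonzero) (simp add: monom_1_dvd_iff' c[symmetric])
  then have "coeff (rst a (lc 1 b 0 w) f) k = 0" if "k < n" for k using that c by simp
  moreover have "lc 1 b 0 w = b" by (rule lc_1_0)
  ultimately show ?thesis by (simp add: monom_1_dvd_iff')
qed

lemma quot_mult_ge:
  assumes h: "mult_ge (lf a b c * h') p m" and nz: "(a, b, c) \<noteq> (0, 0, 0)"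
  shows "mult_ge h' p (if lv a b c p = 0 then m - 1 else m)"
  unfolding mult_ge_def
proof (intro allI impI)
  fix k q assume k: "(k::complex) \<noteq> 0"
  have hk: "monom 1 m dvd [:k * lv a b c p, lv a b c q':] * rst (sc k p) q' h'" for q'
  proof -
    have "monom 1 m dvd rst (sc k p) q' (lf a b c * h')" using h k unfolding mult_ge_def by blast
    moreover have "rst (sc k p) q' (lf a b c * h') = [:k * lv a b c p, lv a b c q':] * rst (sc k p) q' h'"
      by simp
    ultimately show ?thesis by simp
  qed
  show "monom 1 (if lv a b c p = 0 then m - 1 else m) dvd rst (sc k p) q h'"
  proof (cases "lv a b c p = 0")
    case False
    then have "poly [:k * lv a b c p, lv a b c q:] 0 \<noteq> 0" using k by simp
    from dvd_cancel_unit0[OF hk[of q] this] show ?thesis using False by simp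
  next
    case True
    have one: "monom 1 (m - 1) dvd rst (sc k p) q' h'" if q': "lv a b c q' \<noteq> 0" for q'
    proof (cases m)
      case 0 then show ?thesis by (simp add: monom_0 one_pCons[symmetric])
    next
      case (Suc m')
      have "[:k * lv a b c p, lv a b c q':] = monom 1 1 * [:lv a b c q':]"
        using True by (simp add: monom_Suc monom_0)
      then have "monom 1 1 * monom 1 m' dvd monom 1 1 * ([:lv a b c q':] * rst (sc k p) q' h')"
        using hk[of q'] Suc by (simp add: mult_monom mult.assoc)
      then have "monom 1 m' dvd [:lv a b c q':] * rst (sc k p) q' h'"
        by (subst (asm) dvd_mult_cancel_left) simp
      then have "monom 1 m' dvd smult (lv a b c q') (rst (sc k p) q' h')"
        by simp
      then show ?thesis using q' Suc by (simp add: dvd_smult_cancel)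
    qed
    obtain w where w: "lv a b c w \<noteq> 0" using lv_witness[OF nz] by blast
    have "monom 1 (m - 1) dvd rst (sc k p) q h'"
    proof (cases "lv a b c q = 0")
      case False then show ?thesis using one by blast
    next
      case qz: True
      show ?thesis
      proof (rule dir_dense[where w = w])
        fix t :: complex assume "t \<noteq> 0"
        then have "lv a b c (lc 1 q t w) \<noteq> 0" using qz w by simp
        then show "monom 1 (m - 1) dvd rst (sc k p) (lc 1 q t w) h'" by (rule one)
      qed
    qed
    then show ?thesis using True by simp
  qed
qed

lemma quot_FH:
  assumes h: "FH (lf a b c * h') d" and nz: "(a, b, c) \<noteq> (0, 0, 0)" and d: "d \<ge> 1"
  shows "FH h' (d - 1)"
  unfolding FH_def
proof (intro allI impI)
  fix k v assume k: "(k::complex) \<noteq> 0"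
  have main: "val h' (sc k v) = k ^ (d - 1) * val h' v" if v: "lv a b c v \<noteq> 0" for v
  proof -
    have "k * lv a b c v * val h' (sc k v) = k ^ d * (lv a b c v * val h' v)"
      using h k unfolding FH_def by (metis val_simps(2) val_lf lv_sc)
    also have "k ^ d = k * k ^ (d - 1)" using d by (simp add: power_eq_if)
    finally show ?thesis using k v by (simp add: mult_ac)
  qed
  show "val h' (sc k v) = k ^ (d - 1) * val h' v"
  proof (cases "lv a b c v = 0")
    case False then show ?thesis by (rule main)
  next
    case True
    obtain w where w: "lv a b c w \<noteq> 0" using lv_witness[OF nz] by blast
    let ?P = "rst (sc k v) (sc k w) h' - smult (k ^ (d - 1)) (rst v w h')"
    have "?P = 0"
    proof (rule poly_zero_nonzero)
      fix t :: complex assume t: "t \<noteq> 0"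
      have e: "lc 1 (sc k v) t (sc k w) = sc k (lc 1 v t w)" by (rule pt_eqI) (simp_all add: algebra_simps)
      have "lv a b c (lc 1 v t w) \<noteq> 0" using True w t by simp
      then show "poly ?P t = 0" using main by (simp add: poly_rst e)
    qed
    then have "poly ?P 0 = 0" by simp
    then show ?thesis by (simp add: poly_rst_0)
  qed
qed




section \<open>Vanishing on lines\<close>

lemma FHD: "FH f d \<Longrightarrow> c \<noteq> 0 \<Longrightarrow> val f (sc c v) = c ^ d * val f v"
  unfolding FH_def by blast

lemma pcompose_pow: "pcompose (p ^ n) r = pcompose p r ^ n"
  by (induction n) (simp_all add: pcompose_mult one_pCons)

lemma sc_1: "sc 1 p = p" by (rule pt_eqI) simp_all

lemma line_vanish:
  assumes FH: "FH h d" and mp: "mult_ge h p a" and mq: "mult_ge h q b" and mr: "mult_ge h (lc 1 p 1 q) c"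
    and sum: "a + b + c > d"
  shows "val h (lc s p t q) = 0"
proof -
  let ?G = "rst p q h"
  have G0: "?G = 0"
  proof (rule ccontr)
    assume Gnz: "?G \<noteq> 0"
    let ?H = "rst q p h"
    define n where "n = degree ?G"
    have vals: "poly ?H u = u ^ d * poly ?G (inverse u)" if u: "u \<noteq> 0" for u
    proof -
      have e: "lc 1 q u p = sc u (lc 1 p (inverse u) q)" using u by (intro pt_eqI) (simp_all add: field_simps)
      show ?thesis using FHD[OF FH u] by (simp add: poly_rst e)
    qed
    have eq: "monom 1 n * ?H = monom 1 d * reflect_poly ?G"
    proof (rule poly_eq_nonzero)
      fix u :: complex assume u: "u \<noteq> 0"
      show "poly (monom 1 n * ?H) u = poly (monom 1 d * reflect_poly ?G) u"
        using vals[OF u] u by (simp add: poly_monom poly_reflect_poly_nz n_def mult_ac)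
    qed
    have rnz: "poly (reflect_poly ?G) 0 \<noteq> 0" using Gnz by (simp add: poly_0_coeff_0)
    then have Hnz: "?H \<noteq> 0" using eq by auto
    have "order 0 (monom 1 n * ?H) = n + order 0 ?H" using Hnz by (simp add: order_mult)
    moreover have "order 0 (monom 1 d * reflect_poly ?G) = d"
      using rnz order_root[of "reflect_poly ?G" 0] by (auto simp: order_mult)
    ultimately have nd: "n + order 0 ?H = d" using eq by simp
    have "monom 1 b dvd ?H" using mq unfolding mult_ge_def by (metis sc_1 one_neq_zero)
    then have bH: "b \<le> order 0 ?H" using Hnz by (simp add: monom_1_dvd_iff)
    have aG: "monom 1 a dvd ?G" using mp unfolding mult_ge_def by (metis sc_1 one_neq_zero)
    have cG1: "monom 1 c dvd rst (lc 1 p 1 q) q h" using mr unfolding mult_ge_def by (metis sc_1 one_neq_zero)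
    have shift: "rst (lc 1 p 1 q) q h = pcompose ?G [:1, 1:]"
    proof (rule poly_eq_nonzero)
      fix u :: complex
      have "lc 1 (lc 1 p 1 q) u q = lc 1 p (1 + u) q" by (intro pt_eqI) (simp_all add: algebra_simps)
      then show "poly (rst (lc 1 p 1 q) q h) u = poly (pcompose ?G [:1, 1:]) u"
        by (simp add: poly_rst poly_pcompose)
    qed
    obtain K where K: "pcompose ?G [:1, 1:] = monom 1 c * K" using cG1 shift by (auto elim: dvdE)
    have "?G = pcompose (pcompose ?G [:1, 1:]) [:-1, 1:]"
      by (simp add: pcompose_assoc[symmetric] pcompose_pCons)
    also have "\<dots> = pcompose (monom 1 c) [:-1, 1:] * pcompose K [:-1, 1:]" by (simp add: K pcompose_mult)
    also have "pcompose (monom 1 c) [:-1, 1:] = [:-1, 1:] ^ c"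
      by (simp add: monom_altdef pcompose_pow pcompose_pCons)
    finally have cG: "[:-1, 1:] ^ c dvd ?G" by simp
    have aG': "[:0, 1:] ^ a dvd ?G" using aG by (simp add: monom_altdef)
    obtain G1 where G1: "?G = [:0, 1:] ^ a * G1" using aG' by (auto elim: dvdE)
    have G1nz: "G1 \<noteq> 0" using Gnz G1 by auto
    have "c \<le> order 1 ?G" using cG Gnz by (simp add: order_divides)
    also have "order 1 ?G = order 1 ([:0, 1:] ^ a :: complex poly) + order 1 G1" using G1 Gnz by (simp add: order_mult)
    also have "order 1 ([:0, 1:] ^ a :: complex poly) = 0"
      using order_root[of "[:0, 1:] ^ a :: complex poly" 1] by simp
    finally have "[:-1, 1:] ^ c dvd G1" using G1nz by (simp add: order_divides)
    then have "[:0, 1:] ^ a * ([:-1, 1:] ^ c :: complex poly) dvd ?G" unfolding G1 by (rule mult_dvd_mono[OF dvd_refl])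
    then have "degree ([:0, 1:] ^ a * [:-1, 1:] ^ c :: complex poly) \<le> n" unfolding n_def using Gnz by (rule dvd_imp_degree_le)
    moreover have "degree ([:0, 1:] ^ a * [:-1, 1:] ^ c :: complex poly) = a + c"
      using degree_linear_power[of "0::complex" a] degree_linear_power[of "-1::complex" c]
      by (subst degree_mult_eq) auto
    ultimately show False using nd bH sum by linarith
  qed
  show ?thesis
  proof (cases "s = 0")
    case False
    have e: "lc s p t q = sc s (lc 1 p (t / s) q)" using False by (intro pt_eqI) (simp_all add: field_simps)
    have "val h (lc 1 p (t / s) q) = 0" using G0 by (metis poly_0 poly_rst)
    then show ?thesis using FHD[OF FH False] by (simp add: e)
  next
    case True
    let ?P = "rst (sc t q) p h"
    have "?P = 0"
    proof (rule poly_zero_nonzero)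
      fix s' :: complex assume s': "s' \<noteq> 0"
      have e1: "lc 1 (sc t q) s' p = sc s' (lc 1 p (t / s') q)" using s' by (intro pt_eqI) (simp_all add: field_simps)
      have "val h (lc 1 p (t / s') q) = 0" using G0 by (metis poly_0 poly_rst)
      then show "poly ?P s' = 0" using FHD[OF FH s'] by (simp add: poly_rst e1)
    qed
    then have "poly ?P 0 = 0" by simp
    moreover have "lc 0 p t q = sc t q" by (intro pt_eqI) simp_all
    ultimately show ?thesis using True by (simp add: poly_rst_0)
  qed
qed


lemma lift_dvd:
  fixes P :: "'a::comm_ring_1 poly"
  shows "(\<And>k. D dvd coeff P k) \<Longrightarrow> \<exists>P'. P = [:D:] * P'"
proof (induction P)
  case 0 have "(0::'a poly) = [:D:] * 0" by simp
  then show ?case by blast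
next
  case (pCons a p)
  have "D dvd a" using pCons.prems[of 0] by simp
  then obtain a' where a': "a = D * a'" by (auto elim: dvdE)
  have "\<And>k. D dvd coeff p k" using pCons.prems[of "Suc k" for k] by simp
  then obtain p' where p': "p = [:D:] * p'" using pCons.IH by blast
  have "pCons a p = [:D:] * pCons a' p'" using a' p' by simp
  then show ?case by blast
qed

lemma ev2_0[simp]: "ev2 x y 0 = 0" and ev2_1[simp]: "ev2 x y 1 = 1"
  using rhomD(1,2)[OF rhom_ev2] by auto

lemma val_pCons: "val (pCons a p) v = ev2 (px v) (py v) a + pz v * val p v"
  by (simp add: val_ev2 map_poly_pCons)

lemma val_const_outer: "val [:a:] v = ev2 (px v) (py v) a"
  by (simp add: val_pCons)

lemma ev2_pCons: "ev2 x y (pCons a p) = poly a x + y * ev2 x y p"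
  unfolding ev2_def by (simp add: map_poly_pCons)

lemma map_ev2_zero:
  assumes "\<And>z. val h (x, y, z) = 0"
  shows "map_poly (ev2 x y) h = 0"
  using assms by (simp add: val_ev2 poly_all_0_iff_0[symmetric])

lemma divZ:
  assumes "\<And>x y. val h (x, y, al * x + be * y) = 0"
  shows "\<exists>h'. h = lf (- al) (- be) 1 * h'"
proof -
  define c :: "complex poly poly" where "c = [:[:0, al:], [:be:]:]"
  have ec: "ev2 x y c = al * x + be * y" for x y unfolding c_def by (simp add: ev2_pCons)
  have "ev2 x y (poly h c) = 0" for x y
    using assms[of x y] by (simp add: rhom_poly_comm[OF rhom_ev2] ec val_ev2)
  then have "poly h c = 0" by (rule ev2_zero)
  then obtain h' where h': "h = [:- c, 1:] * h'" by (auto simp: poly_eq_0_iff_dvd elim: dvdE)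
  have "[:- c, 1:] = lf (- al) (- be) 1"
    by (rule val_eqI) (simp add: val_pCons ec rhom_uminus[OF rhom_ev2] rhomD[OF rhom_ev2] lv_def one_pCons[symmetric] algebra_simps)
  then show ?thesis using h' by auto
qed

lemma divY:
  assumes "\<And>x z. val h (x, al * x, z) = 0"
  shows "\<exists>h'. h = lf (- al) 1 0 * h'"
proof -
  define D :: "complex poly poly" where "D = [:- [:0, al:], 1:]"
  have "D dvd coeff h k" for k
  proof -
    have "poly (poly (coeff h k) [:0, al:]) x = 0" for x
    proof -
      have "map_poly (ev2 x (al * x)) h = 0" using assms by (intro map_ev2_zero) auto
      then have "ev2 x (al * x) (coeff h k) = 0" by (metis coeff_0 coeff_map_poly rhomD(1)[OF rhom_ev2])
      then show ?thesis by (simp add: rhom_poly_comm[OF rhom_poly_eval] ev2_def mult.commute)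
    qed
    then have "poly (coeff h k) [:0, al:] = 0" by (simp add: poly_all_0_iff_0[symmetric])
    then show ?thesis unfolding D_def by (simp add: poly_eq_0_iff_dvd)
  qed
  then obtain h' where h: "h = [:D:] * h'" using lift_dvd by blast
  have "[:D:] = lf (- al) 1 0"
    by (rule val_eqI) (simp add: val_const_outer D_def ev2_pCons lv_def one_pCons[symmetric] algebra_simps)
  then show ?thesis using h by metis
qed

lemma divX:
  assumes "\<And>y z. val h (0, y, z) = 0"
  shows "\<exists>h'. h = lf 1 0 0 * h'"
proof -
  define D :: "complex poly" where "D = [:0, 1:]"
  have inner: "D dvd coeff (coeff h k) j" for k j
  proof -
    have "map_poly (ev2 0 y) h = 0" for y using assms by (intro map_ev2_zero) auto
    then have "ev2 0 y (coeff h k) = 0" for y by (metis coeff_0 coeff_map_poly rhomD(1)[OF rhom_ev2])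
    then have "map_poly (\<lambda>p. poly p 0) (coeff h k) = 0" unfolding ev2_def by (simp add: poly_all_0_iff_0[symmetric])
    then have "poly (coeff (coeff h k) j) 0 = 0" by (metis coeff_0 coeff_map_poly poly_0)
    then show ?thesis unfolding D_def using poly_eq_0_iff_dvd[of "coeff (coeff h k) j" 0] by simp
  qed
  have "\<exists>q. coeff h k = [:D:] * q" for k using inner lift_dvd by blast
  then have "[:D:] dvd coeff h k" for k by (metis dvd_triv_left)
  then obtain h' where h: "h = [:[:D:]:] * h'" using lift_dvd by blast
  have "[:[:D:]:] = lf 1 0 0" unfolding D_def
    by (rule val_eqI) (simp add: val_const_outer ev2_pCons lv_def)
  then show ?thesis using h by metis
qed


section \<open>Peeling lines\<close>

lemma mult_ge_0: "mult_ge h p 0"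
  unfolding mult_ge_def by (simp add: monom_0 one_pCons[symmetric])

lemma peel_gen:
  assumes h: "h \<noteq> 0" and FH: "FH h d" and mi: "mult_ge h (Pt i) ai" and mj: "mult_ge h (Pt j) aj"
    and mr: "mult_ge h (lc 1 (Pt i) 1 (Pt j)) ar" and sum: "ai + aj + ar > d"
    and dv: "\<And>g. (\<And>s t. val g (lc s (Pt i) t (Pt j)) = 0) \<Longrightarrow> \<exists>g'. g = lf a b c * g'"
    and nz: "(a, b, c) \<noteq> (0, 0, 0)"
    and mall: "\<forall>t<7. mult_ge h (Pt t) (m t)"
  shows "d \<ge> 1 \<and> (\<exists>h'. h' \<noteq> 0 \<and> FH h' (d - 1) \<and>
    (\<forall>t<7. mult_ge h' (Pt t) (if lv a b c (Pt t) = 0 then m t - 1 else m t)))"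
proof -
  have van: "val h (lc s (Pt i) t (Pt j)) = 0" for s t by (rule line_vanish[OF FH mi mj mr sum])
  obtain h' where h': "h = lf a b c * h'" using dv van by blast
  have d1: "d \<ge> 1"
  proof (rule ccontr)
    assume "\<not> d \<ge> 1" then have d0: "d = 0" by simp
    have "val h v = 0" for v
    proof -
      let ?P = "rst (0,0,0) v h - [:val h v:]"
      have "?P = 0" by (rule poly_zero_nonzero) (simp add: rst_0_eq FHD[OF FH] d0)
      then have "poly ?P 0 = 0" by simp
      moreover have "sc 0 v = lc 0 (Pt i) 0 (Pt j)" by (rule pt_eqI) simp_all
      ultimately show ?thesis using van by (simp add: rst_0_eq)
    qed
    then show False using h val_zero by blast
  qed
  have "h' \<noteq> 0" using h h' by auto
  moreover have "FH h' (d - 1)" using quot_FH[OF _ nz d1] FH h' by blast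
  moreover have "\<forall>t<7. mult_ge h' (Pt t) (if lv a b c (Pt t) = 0 then m t - 1 else m t)"
    using quot_mult_ge[OF _ nz] mall h' by blast
  ultimately show ?thesis using d1 by blast
qed

definition wsum :: "(nat \<Rightarrow> nat) \<Rightarrow> nat" where
  "wsum m = 3 * (m 0 + m 1 + m 2 + m 3) + 6 * (m 4 + m 5 + m 6)"

lemma peel_L1:
  assumes h: "h \<noteq> 0" and FH: "FH h d" and mall: "\<forall>t<7. mult_ge h (Pt t) (m t)"
    and sum: "m 1 + m 2 + m 4 > d"
  shows "d \<ge> 1 \<and> (\<exists>h'. h' \<noteq> 0 \<and> FH h' (d - 1) \<and>
    (\<forall>t<7. mult_ge h' (Pt t) (if lv (1) (0) (0) (Pt t) = 0 then m t - 1 else m t)))"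
proof (rule peel_gen[OF h FH _ _ _ sum _ _ mall])
  show "mult_ge h (Pt 1) (m 1)" by (rule mall[rule_format]) simp
  show "mult_ge h (Pt 2) (m 2)" by (rule mall[rule_format]) simp
  show "mult_ge h (lc 1 (Pt 1) 1 (Pt 2)) (m 4)"
  proof -
    have "lc 1 (Pt 1) 1 (Pt 2) = Pt 4" by (simp add: lc_def)
    moreover have "mult_ge h (Pt 4) (m 4)" by (rule mall[rule_format]) simp
    ultimately show ?thesis by simp
  qed
  show "((1) :: complex, (0) :: complex, (0) :: complex) \<noteq> (0, 0, 0)" by simp
  fix g assume H: "\<And>s t. val g (lc s (Pt 1) t (Pt 2)) = 0"
  show "\<exists>g'. g = lf (1) (0) (0) * g'"
  proof (rule divX)
    fix y z
    show "val g (0, y, z) = 0" using H[of "y" "z"] by (simp add: lc_def)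
  qed
qed

lemma peel_L2:
  assumes h: "h \<noteq> 0" and FH: "FH h d" and mall: "\<forall>t<7. mult_ge h (Pt t) (m t)"
    and sum: "m 0 + m 2 + m 5 > d"
  shows "d \<ge> 1 \<and> (\<exists>h'. h' \<noteq> 0 \<and> FH h' (d - 1) \<and>
    (\<forall>t<7. mult_ge h' (Pt t) (if lv (- 0) (1) (0) (Pt t) = 0 then m t - 1 else m t)))"
proof (rule peel_gen[OF h FH _ _ _ sum _ _ mall])
  show "mult_ge h (Pt 0) (m 0)" by (rule mall[rule_format]) simp
  show "mult_ge h (Pt 2) (m 2)" by (rule mall[rule_format]) simp
  show "mult_ge h (lc 1 (Pt 0) 1 (Pt 2)) (m 5)"
  proof -
    have "lc 1 (Pt 0) 1 (Pt 2) = Pt 5" by (simp add: lc_def)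
    moreover have "mult_ge h (Pt 5) (m 5)" by (rule mall[rule_format]) simp
    ultimately show ?thesis by simp
  qed
  show "((- 0) :: complex, (1) :: complex, (0) :: complex) \<noteq> (0, 0, 0)" by simp
  fix g assume H: "\<And>s t. val g (lc s (Pt 0) t (Pt 2)) = 0"
  show "\<exists>g'. g = lf (- 0) (1) (0) * g'"
  proof (rule divY[of g 0])
    fix x z
    show "val g (x, 0 * x, z) = 0" using H[of "x" "z"] by (simp add: lc_def)
  qed
qed

lemma peel_L3:
  assumes h: "h \<noteq> 0" and FH: "FH h d" and mall: "\<forall>t<7. mult_ge h (Pt t) (m t)"
    and sum: "m 0 + m 1 + m 6 > d"
  shows "d \<ge> 1 \<and> (\<exists>h'. h' \<noteq> 0 \<and> FH h' (d - 1) \<and>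
    (\<forall>t<7. mult_ge h' (Pt t) (if lv (- 0) (- 0) (1) (Pt t) = 0 then m t - 1 else m t)))"
proof (rule peel_gen[OF h FH _ _ _ sum _ _ mall])
  show "mult_ge h (Pt 0) (m 0)" by (rule mall[rule_format]) simp
  show "mult_ge h (Pt 1) (m 1)" by (rule mall[rule_format]) simp
  show "mult_ge h (lc 1 (Pt 0) 1 (Pt 1)) (m 6)"
  proof -
    have "lc 1 (Pt 0) 1 (Pt 1) = Pt 6" by (simp add: lc_def)
    moreover have "mult_ge h (Pt 6) (m 6)" by (rule mall[rule_format]) simp
    ultimately show ?thesis by simp
  qed
  show "((- 0) :: complex, (- 0) :: complex, (1) :: complex) \<noteq> (0, 0, 0)" by simp
  fix g assume H: "\<And>s t. val g (lc s (Pt 0) t (Pt 1)) = 0"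
  show "\<exists>g'. g = lf (- 0) (- 0) (1) * g'"
  proof (rule divZ[of g 0 0])
    fix x y
    show "val g (x, y, 0 * x + 0 * y) = 0" using H[of "x" "y"] by (simp add: lc_def)
  qed
qed

lemma peel_L4:
  assumes h: "h \<noteq> 0" and FH: "FH h d" and mall: "\<forall>t<7. mult_ge h (Pt t) (m t)"
    and sum: "m 2 + m 6 + m 3 > d"
  shows "d \<ge> 1 \<and> (\<exists>h'. h' \<noteq> 0 \<and> FH h' (d - 1) \<and>
    (\<forall>t<7. mult_ge h' (Pt t) (if lv (- 1) (1) (0) (Pt t) = 0 then m t - 1 else m t)))"
proof (rule peel_gen[OF h FH _ _ _ sum _ _ mall])
  show "mult_ge h (Pt 2) (m 2)" by (rule mall[rule_format]) simp
  show "mult_ge h (Pt 6) (m 6)" by (rule mall[rule_format]) simp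
  show "mult_ge h (lc 1 (Pt 2) 1 (Pt 6)) (m 3)"
  proof -
    have "lc 1 (Pt 2) 1 (Pt 6) = Pt 3" by (simp add: lc_def)
    moreover have "mult_ge h (Pt 3) (m 3)" by (rule mall[rule_format]) simp
    ultimately show ?thesis by simp
  qed
  show "((- 1) :: complex, (1) :: complex, (0) :: complex) \<noteq> (0, 0, 0)" by simp
  fix g assume H: "\<And>s t. val g (lc s (Pt 2) t (Pt 6)) = 0"
  show "\<exists>g'. g = lf (- 1) (1) (0) * g'"
  proof (rule divY[of g 1])
    fix x z
    show "val g (x, 1 * x, z) = 0" using H[of "z" "x"] by (simp add: lc_def)
  qed
qed

lemma peel_L5:
  assumes h: "h \<noteq> 0" and FH: "FH h d" and mall: "\<forall>t<7. mult_ge h (Pt t) (m t)"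
    and sum: "m 0 + m 4 + m 3 > d"
  shows "d \<ge> 1 \<and> (\<exists>h'. h' \<noteq> 0 \<and> FH h' (d - 1) \<and>
    (\<forall>t<7. mult_ge h' (Pt t) (if lv (- 0) (- 1) (1) (Pt t) = 0 then m t - 1 else m t)))"
proof (rule peel_gen[OF h FH _ _ _ sum _ _ mall])
  show "mult_ge h (Pt 0) (m 0)" by (rule mall[rule_format]) simp
  show "mult_ge h (Pt 4) (m 4)" by (rule mall[rule_format]) simp
  show "mult_ge h (lc 1 (Pt 0) 1 (Pt 4)) (m 3)"
  proof -
    have "lc 1 (Pt 0) 1 (Pt 4) = Pt 3" by (simp add: lc_def)
    moreover have "mult_ge h (Pt 3) (m 3)" by (rule mall[rule_format]) simp
    ultimately show ?thesis by simp
  qed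
  show "((- 0) :: complex, (- 1) :: complex, (1) :: complex) \<noteq> (0, 0, 0)" by simp
  fix g assume H: "\<And>s t. val g (lc s (Pt 0) t (Pt 4)) = 0"
  show "\<exists>g'. g = lf (- 0) (- 1) (1) * g'"
  proof (rule divZ[of g 0 1])
    fix x y
    show "val g (x, y, 0 * x + 1 * y) = 0" using H[of "x" "y"] by (simp add: lc_def)
  qed
qed

lemma peel_L6:
  assumes h: "h \<noteq> 0" and FH: "FH h d" and mall: "\<forall>t<7. mult_ge h (Pt t) (m t)"
    and sum: "m 1 + m 5 + m 3 > d"
  shows "d \<ge> 1 \<and> (\<exists>h'. h' \<noteq> 0 \<and> FH h' (d - 1) \<and>
    (\<forall>t<7. mult_ge h' (Pt t) (if lv (- 1) (- 0) (1) (Pt t) = 0 then m t - 1 else m t)))"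
proof (rule peel_gen[OF h FH _ _ _ sum _ _ mall])
  show "mult_ge h (Pt 1) (m 1)" by (rule mall[rule_format]) simp
  show "mult_ge h (Pt 5) (m 5)" by (rule mall[rule_format]) simp
  show "mult_ge h (lc 1 (Pt 1) 1 (Pt 5)) (m 3)"
  proof -
    have "lc 1 (Pt 1) 1 (Pt 5) = Pt 3" by (simp add: lc_def)
    moreover have "mult_ge h (Pt 3) (m 3)" by (rule mall[rule_format]) simp
    ultimately show ?thesis by simp
  qed
  show "((- 1) :: complex, (- 0) :: complex, (1) :: complex) \<noteq> (0, 0, 0)" by simp
  fix g assume H: "\<And>s t. val g (lc s (Pt 1) t (Pt 5)) = 0"
  show "\<exists>g'. g = lf (- 1) (- 0) (1) * g'"
  proof (rule divZ[of g 1 0])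
    fix x y
    show "val g (x, y, 1 * x + 0 * y) = 0" using H[of "y" "x"] by (simp add: lc_def)
  qed
qed

lemma peel_M1:
  assumes h: "h \<noteq> 0" and FH: "FH h d" and mall: "\<forall>t<7. mult_ge h (Pt t) (m t)"
    and sum: "m 4 + m 5 + 0 > d"
  shows "d \<ge> 1 \<and> (\<exists>h'. h' \<noteq> 0 \<and> FH h' (d - 1) \<and>
    (\<forall>t<7. mult_ge h' (Pt t) (if lv (- 1) (- 1) (1) (Pt t) = 0 then m t - 1 else m t)))"
proof (rule peel_gen[OF h FH _ _ _ sum _ _ mall])
  show "mult_ge h (Pt 4) (m 4)" by (rule mall[rule_format]) simp
  show "mult_ge h (Pt 5) (m 5)" by (rule mall[rule_format]) simp
  show "mult_ge h (lc 1 (Pt 4) 1 (Pt 5)) (0)"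
    by (rule mult_ge_0)
  show "((- 1) :: complex, (- 1) :: complex, (1) :: complex) \<noteq> (0, 0, 0)" by simp
  fix g assume H: "\<And>s t. val g (lc s (Pt 4) t (Pt 5)) = 0"
  show "\<exists>g'. g = lf (- 1) (- 1) (1) * g'"
  proof (rule divZ[of g 1 1])
    fix x y
    show "val g (x, y, 1 * x + 1 * y) = 0" using H[of "y" "x"] by (simp add: lc_def add.commute)
  qed
qed

lemma peel_M2:
  assumes h: "h \<noteq> 0" and FH: "FH h d" and mall: "\<forall>t<7. mult_ge h (Pt t) (m t)"
    and sum: "m 4 + m 6 + 0 > d"
  shows "d \<ge> 1 \<and> (\<exists>h'. h' \<noteq> 0 \<and> FH h' (d - 1) \<and>
    (\<forall>t<7. mult_ge h' (Pt t) (if lv (- (- 1)) (- 1) (1) (Pt t) = 0 then m t - 1 else m t)))"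
proof (rule peel_gen[OF h FH _ _ _ sum _ _ mall])
  show "mult_ge h (Pt 4) (m 4)" by (rule mall[rule_format]) simp
  show "mult_ge h (Pt 6) (m 6)" by (rule mall[rule_format]) simp
  show "mult_ge h (lc 1 (Pt 4) 1 (Pt 6)) (0)"
    by (rule mult_ge_0)
  show "((- (- 1)) :: complex, (- 1) :: complex, (1) :: complex) \<noteq> (0, 0, 0)" by simp
  fix g assume H: "\<And>s t. val g (lc s (Pt 4) t (Pt 6)) = 0"
  show "\<exists>g'. g = lf (- (- 1)) (- 1) (1) * g'"
  proof (rule divZ[of g "- 1" 1])
    fix x y
    show "val g (x, y, (- 1) * x + 1 * y) = 0" using H[of "y - x" "x"] by (simp add: lc_def)
  qed
qed

lemma peel_M3:
  assumes h: "h \<noteq> 0" and FH: "FH h d" and mall: "\<forall>t<7. mult_ge h (Pt t) (m t)"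
    and sum: "m 5 + m 6 + 0 > d"
  shows "d \<ge> 1 \<and> (\<exists>h'. h' \<noteq> 0 \<and> FH h' (d - 1) \<and>
    (\<forall>t<7. mult_ge h' (Pt t) (if lv (- 1) (- (- 1)) (1) (Pt t) = 0 then m t - 1 else m t)))"
proof (rule peel_gen[OF h FH _ _ _ sum _ _ mall])
  show "mult_ge h (Pt 5) (m 5)" by (rule mall[rule_format]) simp
  show "mult_ge h (Pt 6) (m 6)" by (rule mall[rule_format]) simp
  show "mult_ge h (lc 1 (Pt 5) 1 (Pt 6)) (0)"
    by (rule mult_ge_0)
  show "((- 1) :: complex, (- (- 1)) :: complex, (1) :: complex) \<noteq> (0, 0, 0)" by simp
  fix g assume H: "\<And>s t. val g (lc s (Pt 5) t (Pt 6)) = 0"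
  show "\<exists>g'. g = lf (- 1) (- (- 1)) (1) * g'"
  proof (rule divZ[of g 1 "- 1"])
    fix x y
    show "val g (x, y, 1 * x + (- 1) * y) = 0" using H[of "x - y" "y"] by (simp add: lc_def)
  qed
qed




lemma lin_bound: "(a1::nat) + a2 + a4 \<le> d \<Longrightarrow> a0 + a2 + a5 \<le> d \<Longrightarrow> a0 + a1 + a6 \<le> d \<Longrightarrow> a2 + a6 + a3 \<le> d \<Longrightarrow>
   a0 + a4 + a3 \<le> d \<Longrightarrow> a1 + a5 + a3 \<le> d \<Longrightarrow> a4 + a5 \<le> d \<Longrightarrow> a4 + a6 \<le> d \<Longrightarrow> a5 + a6 \<le> d \<Longrightarrow>
   3 * (a0 + a1 + a2 + a3) + 6 * (a4 + a5 + a6) \<le> 12 * d"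
proof -
  assume a: "a1 + a2 + a4 \<le> d" "a0 + a2 + a5 \<le> d" "a0 + a1 + a6 \<le> d" "a2 + a6 + a3 \<le> d"
   "a0 + a4 + a3 \<le> d" "a1 + a5 + a3 \<le> d" "a4 + a5 \<le> d" "a4 + a6 \<le> d" "a5 + a6 \<le> d"
  have e: "3 * (a0 + a1 + a2 + a3) + 6 * (a4 + a5 + a6) = (a1 + a2 + a4) + (a0 + a2 + a5) + (a0 + a1 + a6)
     + (a2 + a6 + a3) + (a0 + a4 + a3) + (a1 + a5 + a3) + 2 * (a4 + a5) + 2 * (a4 + a6) + 2 * (a5 + a6)"
    by simp
  show ?thesis unfolding e using a by simp
qed

lemma count:
  "h \<noteq> 0 \<Longrightarrow> FH h d \<Longrightarrow> \<forall>t<7. mult_ge h (Pt t) (m t) \<Longrightarrow> wsum m \<le> 12 * d"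
proof (induction d arbitrary: h m rule: less_induct)
  case (less d)
  have step: "wsum m \<le> 12 * d"
    if P: "d \<ge> 1 \<and> (\<exists>h'. h' \<noteq> 0 \<and> FH h' (d - 1) \<and> (\<forall>t<7. mult_ge h' (Pt t) (m' t)))"
      and W: "wsum m \<le> wsum m' + 12" for m'
  proof -
    obtain h' where h': "h' \<noteq> 0" "FH h' (d - 1)" "\<forall>t<7. mult_ge h' (Pt t) (m' t)" using P by blast
    have "d - 1 < d" using P by simp
    then have "wsum m' \<le> 12 * (d - 1)" using less.IH h' by blast
    moreover obtain n where "d = Suc n" using P by (cases d) auto
    ultimately show ?thesis using W by simp
  qed
  have c1: "wsum m \<le> 12 * d" if a: "m 1 + m 2 + m 4 > d"
    by (rule step[OF peel_L1[OF less.prems a]]) (simp add: wsum_def lv_def; arith)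
  have c2: "wsum m \<le> 12 * d" if a: "m 0 + m 2 + m 5 > d"
    by (rule step[OF peel_L2[OF less.prems a]]) (simp add: wsum_def lv_def; arith)
  have c3: "wsum m \<le> 12 * d" if a: "m 0 + m 1 + m 6 > d"
    by (rule step[OF peel_L3[OF less.prems a]]) (simp add: wsum_def lv_def; arith)
  have c4: "wsum m \<le> 12 * d" if a: "m 2 + m 6 + m 3 > d"
    by (rule step[OF peel_L4[OF less.prems a]]) (simp add: wsum_def lv_def; arith)
  have c5: "wsum m \<le> 12 * d" if a: "m 0 + m 4 + m 3 > d"
    by (rule step[OF peel_L5[OF less.prems a]]) (simp add: wsum_def lv_def; arith)
  have c6: "wsum m \<le> 12 * d" if a: "m 1 + m 5 + m 3 > d"
    by (rule step[OF peel_L6[OF less.prems a]]) (simp add: wsum_def lv_def; arith)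
  have c7: "wsum m \<le> 12 * d" if a: "m 4 + m 5 + 0 > d"
    by (rule step[OF peel_M1[OF less.prems a]]) (simp add: wsum_def lv_def; arith)
  have c8: "wsum m \<le> 12 * d" if a: "m 4 + m 6 + 0 > d"
    by (rule step[OF peel_M2[OF less.prems a]]) (simp add: wsum_def lv_def; arith)
  have c9: "wsum m \<le> 12 * d" if a: "m 5 + m 6 + 0 > d"
    by (rule step[OF peel_M3[OF less.prems a]]) (simp add: wsum_def lv_def; arith)
  show ?case
  proof (cases "m 1 + m 2 + m 4 > d \<or> m 0 + m 2 + m 5 > d \<or> m 0 + m 1 + m 6 > d \<or> m 2 + m 6 + m 3 > d
      \<or> m 0 + m 4 + m 3 > d \<or> m 1 + m 5 + m 3 > d \<or> m 4 + m 5 + 0 > d \<or> m 4 + m 6 + 0 > d \<or> m 5 + m 6 + 0 > d")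
    case True then show ?thesis using c1 c2 c3 c4 c5 c6 c7 c8 c9 by blast
  next
    case False
    then have "m 1 + m 2 + m 4 \<le> d" "m 0 + m 2 + m 5 \<le> d" "m 0 + m 1 + m 6 \<le> d" "m 2 + m 6 + m 3 \<le> d"
      "m 0 + m 4 + m 3 \<le> d" "m 1 + m 5 + m 3 \<le> d" "m 4 + m 5 \<le> d" "m 4 + m 6 \<le> d" "m 5 + m 6 \<le> d"
      by auto
    then show ?thesis unfolding wsum_def by (rule lin_bound)
  qed
qed

lemma no_deg5:
  assumes h: "h \<noteq> 0" and FH: "FH h 5" and m: "\<forall>t<7. mult_ge h (Pt t) 2"
  shows False
proof -
  define m0 where "m0 = (\<lambda>t::nat. 2::nat)"
  have m0': "\<forall>t<7. mult_ge h (Pt t) (m0 t)" using m by (simp add: m0_def)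
  define m1 where "m1 = (\<lambda>t. if lv 1 0 0 (Pt t) = 0 then m0 t - 1 else m0 t)"
  obtain h1 where h1: "h1 \<noteq> 0" "FH h1 4" "\<forall>t<7. mult_ge h1 (Pt t) (m1 t)"
    using peel_L1[OF h FH m0'] unfolding m1_def by (auto simp: m0_def)
  define m2 where "m2 = (\<lambda>t. if lv (- 0) 1 0 (Pt t) = 0 then m1 t - 1 else m1 t)"
  obtain h2 where h2: "h2 \<noteq> 0" "FH h2 3" "\<forall>t<7. mult_ge h2 (Pt t) (m2 t)"
    using peel_L2[OF h1] unfolding m2_def by (auto simp: m1_def m0_def lv_def)
  define m3 where "m3 = (\<lambda>t. if lv (- 0) (- 0) 1 (Pt t) = 0 then m2 t - 1 else m2 t)"
  obtain h3 where h3: "h3 \<noteq> 0" "FH h3 2" "\<forall>t<7. mult_ge h3 (Pt t) (m3 t)"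
    using peel_L3[OF h2] unfolding m3_def by (auto simp: m2_def m1_def m0_def lv_def)
  define m4 where "m4 = (\<lambda>t. if lv (- 1) 1 0 (Pt t) = 0 then m3 t - 1 else m3 t)"
  obtain h4 where h4: "h4 \<noteq> 0" "FH h4 1" "\<forall>t<7. mult_ge h4 (Pt t) (m4 t)"
    using peel_L4[OF h3] unfolding m4_def by (auto simp: m3_def m2_def m1_def m0_def lv_def)
  define m5 where "m5 = (\<lambda>t. if lv (- 0) (- 1) 1 (Pt t) = 0 then m4 t - 1 else m4 t)"
  obtain h5 where h5: "h5 \<noteq> 0" "FH h5 0" "\<forall>t<7. mult_ge h5 (Pt t) (m5 t)"
    using peel_L5[OF h4] unfolding m5_def by (auto simp: m4_def m3_def m2_def m1_def m0_def lv_def)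
  have "0 \<ge> (1::nat)"
    using peel_L6[OF h5] by (auto simp: m5_def m4_def m3_def m2_def m1_def m0_def lv_def)
  then show False by simp
qed




section \<open>Certificates\<close>

lemma cert2: fixes x y z :: "'a::idom"
  shows "(x + y + z) ^ 1 * (x * y * z * (x - y) * (y - z) * (z - x)) = (1 * z) * ((y * z * (y - z)) ^ 0 * (z * x * (z - x)) ^ 0 * (x * y * (x - y)) ^ 2) + ((-2) * z + 2 * y) * ((y * z * (y - z)) ^ 0 * (z * x * (z - x)) ^ 1 * (x * y * (x - y)) ^ 1) + ((-1) * y) * ((y * z * (y - z)) ^ 0 * (z * x * (z - x)) ^ 2 * (x * y * (x - y)) ^ 0) + (1 * z) * ((y * z * (y - z)) ^ 1 * (z * x * (z - x)) ^ 0 * (x * y * (x - y)) ^ 1) + ((-1) * y) * ((y * z * (y - z)) ^ 1 * (z * x * (z - x)) ^ 1 * (x * y * (x - y)) ^ 0)"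
  by algebra

lemma cert3: fixes x y z :: "'a::idom"
  shows "(x + y + z) ^ 2 * (x * y * z * (x - y) * (y - z) * (z - x) * (x + y - z) * (x - y + z)) = (3 * z) * ((y * z * (y - z)) ^ 0 * (z * x * (z - x)) ^ 0 * (x * y * (x - y)) ^ 3) + ((-7) * z + 6 * y + 1 * x) * ((y * z * (y - z)) ^ 0 * (z * x * (z - x)) ^ 1 * (x * y * (x - y)) ^ 2) + (6 * z + (-7) * y + 1 * x) * ((y * z * (y - z)) ^ 0 * (z * x * (z - x)) ^ 2 * (x * y * (x - y)) ^ 1) + (3 * y) * ((y * z * (y - z)) ^ 0 * (z * x * (z - x)) ^ 3 * (x * y * (x - y)) ^ 0) + (2 * z + (-1) * y) * ((y * z * (y - z)) ^ 1 * (z * x * (z - x)) ^ 0 * (x * y * (x - y)) ^ 2) + (1 * z + 1 * y) * ((y * z * (y - z)) ^ 1 * (z * x * (z - x)) ^ 1 * (x * y * (x - y)) ^ 1) + ((-1) * z + 2 * y) * ((y * z * (y - z)) ^ 1 * (z * x * (z - x)) ^ 2 * (x * y * (x - y)) ^ 0) + ((-1) * z + (-1) * y) * ((y * z * (y - z)) ^ 2 * (z * x * (z - x)) ^ 0 * (x * y * (x - y)) ^ 1) + ((-1) * z + (-1) * y) * ((y * z * (y - z)) ^ 2 * (z * x * (z - x)) ^ 1 * (x * y * (x - y)) ^ 0)"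
  by algebra

lemma cert4: fixes x y z :: "'a::idom"
  shows "(x + y + z) ^ 3 * (x * y * z * (x - y) * (y - z) * (z - x) * z * (x - y) * (x + y - z) ^ 2) = ((-10) * z) * ((y * z * (y - z)) ^ 0 * (z * x * (z - x)) ^ 1 * (x * y * (x - y)) ^ 3) + (12 * z + (-15) * y + (-1) * x) * ((y * z * (y - z)) ^ 0 * (z * x * (z - x)) ^ 2 * (x * y * (x - y)) ^ 2) + ((-6) * z + 10 * y + (-1) * x) * ((y * z * (y - z)) ^ 0 * (z * x * (z - x)) ^ 3 * (x * y * (x - y)) ^ 1) + ((-3) * y) * ((y * z * (y - z)) ^ 0 * (z * x * (z - x)) ^ 4 * (x * y * (x - y)) ^ 0) + (5 * z) * ((y * z * (y - z)) ^ 1 * (z * x * (z - x)) ^ 0 * (x * y * (x - y)) ^ 3) + ((-3) * z + 15 * y) * ((y * z * (y - z)) ^ 1 * (z * x * (z - x)) ^ 1 * (x * y * (x - y)) ^ 2) + ((-3) * z) * ((y * z * (y - z)) ^ 1 * (z * x * (z - x)) ^ 2 * (x * y * (x - y)) ^ 1) + (1 * z + (-3) * y) * ((y * z * (y - z)) ^ 1 * (z * x * (z - x)) ^ 3 * (x * y * (x - y)) ^ 0) + (2 * z + (-1) * y) * ((y * z * (y - z)) ^ 2 * (z * x * (z - x)) ^ 0 * (x * y * (x - y)) ^ 2) + ((-10) * y) * ((y * z * (y - z)) ^ 2 * (z * x * (z - x)) ^ 1 * (x * y * (x - y)) ^ 1) + (2 * z + 3 * y) * ((y * z * (y - z)) ^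 2 * (z * x * (z - x)) ^ 2 * (x * y * (x - y)) ^ 0) + ((-3) * z + (-1) * y) * ((y * z * (y - z)) ^ 3 * (z * x * (z - x)) ^ 0 * (x * y * (x - y)) ^ 1) + (1 * z + 3 * y) * ((y * z * (y - z)) ^ 3 * (z * x * (z - x)) ^ 1 * (x * y * (x - y)) ^ 0)"
  by algebra

lemma cert6: fixes x y z :: "'a::idom"
  shows "(x + y + z) ^ 4 * ((x * y * z * (x - y) * (y - z) * (z - x)) ^ 2 * (x + y - z) * (x - y + z) * (y + z - x)) = ((-10) * z) * ((y * z * (y - z)) ^ 0 * (z * x * (z - x)) ^ 1 * (x * y * (x - y)) ^ 5) + (9 * z + (-15) * y + (-1) * x) * ((y * z * (y - z)) ^ 0 * (z * x * (z - x)) ^ 2 * (x * y * (x - y)) ^ 4) + (4 * z + 4 * y + (-2) * x) * ((y * z * (y - z)) ^ 0 * (z * x * (z - x)) ^ 3 * (x * y * (x - y)) ^ 3) + ((-15) * z + 9 * y + (-1) * x) * ((y * z * (y - z)) ^ 0 * (z * x * (z - x)) ^ 4 * (x * y * (x - y)) ^ 2) + ((-10) * y) * ((y * z * (y - z)) ^ 0 * (z * x * (z - x)) ^ 5 * (x * y * (x - y)) ^ 1) + (5 * z) * ((y * z * (y - z)) ^ 1 * (z * x * (z - x)) ^ 0 * (x * y * (x - y)) ^ 5) + ((-4) * z + 15 * y) * ((y * z * (y - z)) ^ 1 * (z * x * (z - x)) ^ 1 * (x * y * (x - y)) ^ 4) + ((-8) * z) * ((y * z * (y - z)) ^ 1 *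 (z * x * (z - x)) ^ 2 * (x * y * (x - y)) ^ 3) + ((-8) * y) * ((y * z * (y - z)) ^ 1 * (z * x * (z - x)) ^ 3 * (x * y * (x - y)) ^ 2) + (15 * z + (-4) * y) * ((y * z * (y - z)) ^ 1 * (z * x * (z - x)) ^ 4 * (x * y * (x - y)) ^ 1) + (5 * y) * ((y * z * (y - z)) ^ 1 * (z * x * (z - x)) ^ 5 * (x * y * (x - y)) ^ 0) + (5 * z + (-1) * y) * ((y * z * (y - z)) ^ 2 * (z * x * (z - x)) ^ 0 * (x * y * (x - y)) ^ 4) + ((-4) * y) * ((y * z * (y - z)) ^ 2 * (z * x * (z - x)) ^ 1 * (x * y * (x - y)) ^ 3) + (8 * z + 8 * y) * ((y * z * (y - z)) ^ 2 * (z * x * (z - x)) ^ 2 * (x * y * (x - y)) ^ 2) + ((-4) * z) * ((y * z * (y - z)) ^ 2 * (z * x * (z - x)) ^ 3 * (x * y * (x - y)) ^ 1) + ((-1) * z + 5 * y) * ((y * z * (y - z)) ^ 2 * (z * x * (z - x)) ^ 4 * (x * y * (x - y)) ^ 0) + ((-5) * z + (-2) * y) * ((y * z * (y - z)) ^ 3 * (z * x * (z - x)) ^ 0 * (x * y * (x - y)) ^ 3) + (4 * z + (-9) * y) * ((y * z * (y - z)) ^ 3 * (z * x * (z - x)) ^ 1 * (x * y * (x - y)) ^ 2) + ((-9) * z + 4 * y) * ((y * z * (y - z)) ^ 3 * (z * x * (z - x)) ^ 2 * (x * y * (x - y)) ^ 1) + ((-2) * z + (-5) * y) * ((y * z * (y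 - z)) ^ 3 * (z * x * (z - x)) ^ 3 * (x * y * (x - y)) ^ 0) + ((-5) * z + (-1) * y) * ((y * z * (y - z)) ^ 4 * (z * x * (z - x)) ^ 0 * (x * y * (x - y)) ^ 2) + (10 * z + 10 * y) * ((y * z * (y - z)) ^ 4 * (z * x * (z - x)) ^ 1 * (x * y * (x - y)) ^ 1) + ((-1) * z + (-5) * y) * ((y * z * (y - z)) ^ 4 * (z * x * (z - x)) ^ 2 * (x * y * (x - y)) ^ 0)"
  by algebra


definition L6 :: cpoly3 where "L6 = X * Y * Z * (X - Y) * (Y - Z) * (Z - X)"
definition F3 :: cpoly3 where "F3 = L6 * (X + Y - Z) * (X - Y + Z)"
definition F4 :: cpoly3 where "F4 = L6 * Z * (X - Y) * (X + Y - Z) ^ 2"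
definition F6 :: cpoly3 where "F6 = L6 ^ 2 * (X + Y - Z) * (X - Y + Z) * (Y + Z - X)"

lemma pow_mem: "g \<in> Jideal \<Longrightarrow> g ^ a \<in> ideal_pow Jideal a"
proof (induction a)
  case 0 then show ?case by simp
next
  case (Suc a)
  then have "g ^ a * g \<in> ideal_pow Jideal (Suc a)" by (intro ideal_pow_step) auto
  then show ?case by (simp add: mult.commute)
qed

lemma mon_pow: "a + b + c = m \<Longrightarrow> g1 ^ a * g2 ^ b * g3 ^ c \<in> ideal_pow Jideal m"
  using ideal_pow_mult[OF J_ideal ideal_pow_mult[OF J_ideal pow_mem[OF g_in_J(1)] pow_mem[OF g_in_J(2)]]
      pow_mem[OF g_in_J(3)]] by blast

lemmas Jpow_add = ideal_add[OF ideal_pow_ideal[OF J_ideal]]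
lemmas Jpow_mult = ideal_mult[OF ideal_pow_ideal[OF J_ideal] mon_pow]

lemma mem2: "ell ^ 1 * L6 \<in> ideal_pow Jideal 2"
proof -
  have "ell ^ 1 * L6 = (1 * Z) * (g1 ^ 0 * g2 ^ 0 * g3 ^ 2) + ((-2) * Z + 2 * Y) * (g1 ^ 0 * g2 ^ 1 * g3 ^ 1) + ((-1) * Y) * (g1 ^ 0 * g2 ^ 2 * g3 ^ 0) + (1 * Z) * (g1 ^ 1 * g2 ^ 0 * g3 ^ 1) + ((-1) * Y) * (g1 ^ 1 * g2 ^ 1 * g3 ^ 0)"
    unfolding ell_def L6_def g1_def g2_def g3_def by (rule cert2)
  also have "\<dots> \<in> ideal_pow Jideal 2"
    by (intro Jpow_add; rule Jpow_mult; simp)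
  finally show ?thesis .
qed

lemma mem3: "ell ^ 2 * F3 \<in> ideal_pow Jideal 3"
proof -
  have "ell ^ 2 * F3 = (3 * Z) * (g1 ^ 0 * g2 ^ 0 * g3 ^ 3) + ((-7) * Z + 6 * Y + 1 * X) * (g1 ^ 0 * g2 ^ 1 * g3 ^ 2) + (6 * Z + (-7) * Y + 1 * X) * (g1 ^ 0 * g2 ^ 2 * g3 ^ 1) + (3 * Y) * (g1 ^ 0 * g2 ^ 3 * g3 ^ 0) + (2 * Z + (-1) * Y) * (g1 ^ 1 * g2 ^ 0 * g3 ^ 2) + (1 * Z + 1 * Y) * (g1 ^ 1 * g2 ^ 1 * g3 ^ 1) + ((-1) * Z + 2 * Y) * (g1 ^ 1 * g2 ^ 2 * g3 ^ 0) + ((-1) * Z + (-1) * Y) * (g1 ^ 2 * g2 ^ 0 * g3 ^ 1) + ((-1) * Z + (-1) * Y) * (g1 ^ 2 * g2 ^ 1 * g3 ^ 0)"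
    unfolding ell_def F3_def L6_def g1_def g2_def g3_def by (rule cert3)
  also have "\<dots> \<in> ideal_pow Jideal 3"
    by (intro Jpow_add; rule Jpow_mult; simp)
  finally show ?thesis .
qed

lemma mem4: "ell ^ 3 * F4 \<in> ideal_pow Jideal 4"
proof -
  have "ell ^ 3 * F4 = ((-10) * Z) * (g1 ^ 0 * g2 ^ 1 * g3 ^ 3) + (12 * Z + (-15) * Y + (-1) * X) * (g1 ^ 0 * g2 ^ 2 * g3 ^ 2) + ((-6) * Z + 10 * Y + (-1) * X) * (g1 ^ 0 * g2 ^ 3 * g3 ^ 1) + ((-3) * Y) * (g1 ^ 0 * g2 ^ 4 * g3 ^ 0) + (5 * Z) * (g1 ^ 1 * g2 ^ 0 * g3 ^ 3) + ((-3) * Z + 15 * Y) * (g1 ^ 1 * g2 ^ 1 * g3 ^ 2) + ((-3) * Z) * (g1 ^ 1 * g2 ^ 2 * g3 ^ 1) + (1 * Z + (-3) * Y) * (g1 ^ 1 * g2 ^ 3 * g3 ^ 0) + (2 * Z + (-1) * Y) * (g1 ^ 2 * g2 ^ 0 * g3 ^ 2) + ((-10) * Y) * (g1 ^ 2 * g2 ^ 1 * g3 ^ 1) + (2 * Z + 3 * Y) * (g1 ^ 2 * g2 ^ 2 * g3 ^ 0) + ((-3) * Z + (-1) * Y) * (g1 ^ 3 * g2 ^ 0 * g3 ^ 1) + (1 * Z + 3 * Y) * (g1 ^ 3 * g2 ^ 1 * g3 ^ 0)"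
    unfolding ell_def F4_def L6_def g1_def g2_def g3_def by (rule cert4)
  also have "\<dots> \<in> ideal_pow Jideal 4"
    by (intro Jpow_add; rule Jpow_mult; simp)
  finally show ?thesis .
qed

lemma mem6: "ell ^ 4 * F6 \<in> ideal_pow Jideal 6"
proof -
  have "ell ^ 4 * F6 = ((-10) * Z) * (g1 ^ 0 * g2 ^ 1 * g3 ^ 5) + (9 * Z + (-15) * Y + (-1) * X) * (g1 ^ 0 * g2 ^ 2 * g3 ^ 4) + (4 * Z + 4 * Y + (-2) * X) * (g1 ^ 0 * g2 ^ 3 * g3 ^ 3) + ((-15) * Z + 9 * Y + (-1) * X) * (g1 ^ 0 * g2 ^ 4 * g3 ^ 2) + ((-10) * Y) * (g1 ^ 0 * g2 ^ 5 * g3 ^ 1) + (5 * Z) * (g1 ^ 1 * g2 ^ 0 * g3 ^ 5) + ((-4) * Z + 15 * Y) * (g1 ^ 1 * g2 ^ 1 * g3 ^ 4) + ((-8) * Z) * (g1 ^ 1 * g2 ^ 2 * g3 ^ 3) + ((-8) * Y) * (g1 ^ 1 * g2 ^ 3 * g3 ^ 2) + (15 * Z + (-4) * Y) * (g1 ^ 1 * g2 ^ 4 * g3 ^ 1) + (5 * Y) * (g1 ^ 1 * g2 ^ 5 * g3 ^ 0) + (5 * Z + (-1) * Y) * (g1 ^ 2 * g2 ^ 0 * g3 ^ 4) + ((-4) * Y) * (g1 ^ 2 * g2 ^ 1 * g3 ^ 3) + (8 * Z + 8 * Y) * (g1 ^ 2 * g2 ^ 2 * g3 ^ 2) + ((-4)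 * Z) * (g1 ^ 2 * g2 ^ 3 * g3 ^ 1) + ((-1) * Z + 5 * Y) * (g1 ^ 2 * g2 ^ 4 * g3 ^ 0) + ((-5) * Z + (-2) * Y) * (g1 ^ 3 * g2 ^ 0 * g3 ^ 3) + (4 * Z + (-9) * Y) * (g1 ^ 3 * g2 ^ 1 * g3 ^ 2) + ((-9) * Z + 4 * Y) * (g1 ^ 3 * g2 ^ 2 * g3 ^ 1) + ((-2) * Z + (-5) * Y) * (g1 ^ 3 * g2 ^ 3 * g3 ^ 0) + ((-5) * Z + (-1) * Y) * (g1 ^ 4 * g2 ^ 0 * g3 ^ 2) + (10 * Z + 10 * Y) * (g1 ^ 4 * g2 ^ 1 * g3 ^ 1) + ((-1) * Z + (-5) * Y) * (g1 ^ 4 * g2 ^ 2 * g3 ^ 0)"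
    unfolding ell_def F6_def L6_def g1_def g2_def g3_def by (rule cert6)
  also have "\<dots> \<in> ideal_pow Jideal 6"
    by (intro Jpow_add; rule Jpow_mult; simp)
  finally show ?thesis .
qed


lemma coeff3_add: "coeff3 (f + g) i j k = coeff3 f i j k + coeff3 g i j k"
  unfolding coeff3_def by simp
lemma coeff3_diff: "coeff3 (f - g) i j k = coeff3 f i j k - coeff3 g i j k"
  unfolding coeff3_def by simp

lemma homog_add: "homog_of_deg f d \<Longrightarrow> homog_of_deg g d \<Longrightarrow> homog_of_deg (f + g) d"
  unfolding homog_of_deg_def coeff3_add by (metis add.right_neutral add_0)

lemma homog_diff: "homog_of_deg f d \<Longrightarrow> homog_of_deg g d \<Longrightarrow> homog_of_deg (f - g) d"
  unfolding homog_of_deg_def coeff3_diff by (metis diff_self diff_zero)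

lemma coeff3_mult: "coeff3 (f * g) i j k =
  (\<Sum>k1\<le>k. \<Sum>j1\<le>j. \<Sum>i1\<le>i. coeff3 f i1 j1 k1 * coeff3 g (i - i1) (j - j1) (k - k1))"
  unfolding coeff3_def by (simp add: coeff_mult coeff_sum)

lemma homog_mult:
  assumes f: "homog_of_deg f a" and g: "homog_of_deg g b"
  shows "homog_of_deg (f * g) (a + b)"
  unfolding homog_of_deg_def
proof (intro allI impI)
  fix i j k assume "coeff3 (f * g) i j k \<noteq> 0"
  then have "(\<Sum>k1\<le>k. \<Sum>j1\<le>j. \<Sum>i1\<le>i. coeff3 f i1 j1 k1 * coeff3 g (i - i1) (j - j1) (k - k1)) \<noteq> 0"
    by (simp add: coeff3_mult)
  then obtain k1 where k1: "k1 \<le> k" "(\<Sum>j1\<le>j. \<Sum>i1\<le>i. coeff3 f i1 j1 k1 * coeff3 g (i - i1) (j - j1) (k - k1)) \<noteq> 0"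
    by (meson atMost_iff sum.not_neutral_contains_not_neutral)
  then obtain j1 where j1: "j1 \<le> j" "(\<Sum>i1\<le>i. coeff3 f i1 j1 k1 * coeff3 g (i - i1) (j - j1) (k - k1)) \<noteq> 0"
    by (meson atMost_iff sum.not_neutral_contains_not_neutral)
  then obtain i1 where i1: "i1 \<le> i" "coeff3 f i1 j1 k1 * coeff3 g (i - i1) (j - j1) (k - k1) \<noteq> 0"
    by (meson atMost_iff sum.not_neutral_contains_not_neutral)
  then have nz: "coeff3 f i1 j1 k1 \<noteq> 0" "coeff3 g (i - i1) (j - j1) (k - k1) \<noteq> 0" by auto
  have "i1 + j1 + k1 = a" using f nz(1) unfolding homog_of_deg_def by blast
  moreover have "(i - i1) + (j - j1) + (k - k1) = b" using g nz(2) unfolding homog_of_deg_def by blast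
  ultimately show "i + j + k = a + b" using i1(1) j1(1) k1(1) by linarith
qed

lemma homog_power: "homog_of_deg f a \<Longrightarrow> homog_of_deg (f ^ n) (n * a)"
proof (induction n)
  case 0
  then show ?case unfolding homog_of_deg_def coeff3_def by (auto simp: coeff_pCons one_pCons split: nat.splits)
next
  case (Suc n)
  then show ?case using homog_mult[of f a "f ^ n" "n * a"] by (simp add: add.commute)
qed

lemma homog_X: "homog_of_deg X 1"
  unfolding homog_of_deg_def coeff3_def X_def by (auto simp: coeff_pCons split: nat.splits)
lemma homog_Y: "homog_of_deg Y 1"
  unfolding homog_of_deg_def coeff3_def Y_def by (auto simp: coeff_pCons split: nat.splits)
lemma homog_Z: "homog_of_deg Z 1"
  unfolding homog_of_deg_def coeff3_def Z_def by (auto simp: coeff_pCons split: nat.splits)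

lemmas homog_intros = homog_mult homog_add homog_diff homog_power homog_X homog_Y homog_Z

lemma homog_L6: "homog_of_deg L6 6"
proof -
  have "homog_of_deg L6 (1 + 1 + 1 + 1 + 1 + 1)" unfolding L6_def by (intro homog_intros)
  then show ?thesis by (simp add: eval_nat_numeral)
qed

lemma homog_F3: "homog_of_deg F3 8"
proof -
  have "homog_of_deg F3 (6 + 1 + 1)" unfolding F3_def by (intro homog_intros homog_L6)
  then show ?thesis by simp
qed

lemma homog_F4: "homog_of_deg F4 10"
proof -
  have "homog_of_deg F4 (6 + 1 + 1 + 2 * 1)" unfolding F4_def by (intro homog_intros homog_L6)
  then show ?thesis by simp
qed

lemma homog_F6: "homog_of_deg F6 15"
proof -
  have "homog_of_deg F6 (2 * 6 + 1 + 1 + 1)" unfolding F6_def by (intro homog_intros homog_L6)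
  then show ?thesis by simp
qed

lemma homog_g1: "homog_of_deg g1 3"
proof -
  have "homog_of_deg g1 (1 + 1 + 1)" unfolding g1_def by (intro homog_intros)
  then show ?thesis by (simp add: eval_nat_numeral)
qed

lemma nz_L6: "L6 \<noteq> 0"
proof
  assume "L6 = 0"
  then have "val L6 (1, 2, 4) = 0" by simp
  then show False by (simp add: L6_def)
qed
lemma nz_F3: "F3 \<noteq> 0"
proof
  assume "F3 = 0"
  then have "val F3 (1, 2, 4) = 0" by simp
  then show False by (simp add: F3_def L6_def)
qed
lemma nz_F4: "F4 \<noteq> 0"
proof
  assume "F4 = 0"
  then have "val F4 (1, 2, 4) = 0" by simp
  then show False by (simp add: F4_def L6_def)
qed
lemma nz_F6: "F6 \<noteq> 0"
proof
  assume "F6 = 0"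
  then have "val F6 (1, 2, 4) = 0" by simp
  then show False by (simp add: F6_def L6_def)
qed
lemma nz_g1: "g1 \<noteq> 0"
proof
  assume "g1 = 0"
  then have "val g1 (1, 2, 4) = 0" by simp
  then show False by (simp add: g1_def)
qed

lemma sp_L6: "L6 \<in> symb_pow Jideal 2" using mem2 by (rule symb_mem)
lemma sp_F3: "F3 \<in> symb_pow Jideal 3" using mem3 by (rule symb_mem)
lemma sp_F4: "F4 \<in> symb_pow Jideal 4" using mem4 by (rule symb_mem)
lemma sp_F6: "F6 \<in> symb_pow Jideal 6" using mem6 by (rule symb_mem)
lemma sp_g1: "g1 \<in> symb_pow Jideal 1"
proof -
  have "ell ^ 0 * g1 \<in> ideal_pow Jideal 1" using ideal_pow_1[OF J_ideal] g_in_J(1) by (metis mult_1 power_0)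
  then show ?thesis by (rule symb_mem)
qed




lemma alpha_eqI:
  assumes "F \<in> I" "F \<noteq> 0" "homog_of_deg F b"
    and "\<And>f d. f \<in> I \<Longrightarrow> f \<noteq> 0 \<Longrightarrow> homog_of_deg f d \<Longrightarrow> b \<le> d"
  shows "alpha I = b"
  unfolding alpha_def
proof (rule Least_equality)
  show "\<exists>f\<in>I. f \<noteq> 0 \<and> homog_of_deg f b" using assms by blast
next
  fix d assume "\<exists>f\<in>I. f \<noteq> 0 \<and> homog_of_deg f d"
  then show "b \<le> d" using assms(4) by blast
qed

lemma lower:
  assumes f: "f \<in> symb_pow Jideal m" "f \<noteq> 0" "homog_of_deg f d"
  shows "30 * m \<le> 12 * d"
proof -
  have FH: "FH f d" using homog_FH[OF f(3)] .
  have M: "\<forall>t<7. mult_ge f (Pt t) m"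
  proof (intro allI impI)
    fix t :: nat assume "t < 7"
    then show "mult_ge f (Pt t) m" by (rule symb_mult_ge[OF f(1) FH])
  qed
  have "wsum (\<lambda>_. m) \<le> 12 * d" by (rule count[OF f(2) FH M])
  then show ?thesis by (simp add: wsum_def)
qed

lemma lower2:
  assumes f: "f \<in> symb_pow Jideal 2" "f \<noteq> 0" "homog_of_deg f d"
  shows "6 \<le> d"
proof -
  have "5 \<le> d" using lower[OF f] by simp
  moreover have "d \<noteq> 5"
  proof
    assume d: "d = 5"
    have FH: "FH f 5" using homog_FH[OF f(3)] d by simp
    have M: "\<forall>t<7. mult_ge f (Pt t) 2"
    proof (intro allI impI)
      fix t :: nat assume "t < 7"
      then show "mult_ge f (Pt t) 2" by (rule symb_mult_ge[OF f(1) FH])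
    qed
    show False by (rule no_deg5[OF f(2) FH M])
  qed
  ultimately show ?thesis by simp
qed

lemma wit_even: "k \<ge> 2 \<Longrightarrow> \<exists>F. F \<in> symb_pow Jideal (2 * k) \<and> F \<noteq> 0 \<and> homog_of_deg F (5 * k)"
proof (induction k rule: less_induct)
  case (less k)
  show ?case
  proof (cases "k = 2 \<or> k = 3")
    case True
    then show ?thesis
    proof
      assume "k = 2" then show ?thesis using sp_F4 nz_F4 homog_F4 by auto
    next
      assume "k = 3" then show ?thesis using sp_F6 nz_F6 homog_F6 by auto
    qed
  next
    case False
    then have k4: "k \<ge> 4" using less.prems by simp
    then have "k - 2 < k" "2 \<le> k - 2" by auto
    then have "\<exists>F. F \<in> symb_pow Jideal (2 * (k - 2)) \<and> F \<noteq> 0 \<and> homog_of_deg F (5 * (k - 2))"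
      by (rule less.IH)
    then obtain G where G: "G \<in> symb_pow Jideal (2 * (k - 2))" "G \<noteq> 0" "homog_of_deg G (5 * (k - 2))"
      by blast
    have m1: "F4 * G \<in> symb_pow Jideal (4 + 2 * (k - 2))" using symb_pow_mult[OF J_ideal sp_F4 G(1)] .
    have e1: "4 + 2 * (k - 2) = 2 * k" using k4 by simp
    have h1: "homog_of_deg (F4 * G) (10 + 5 * (k - 2))" using homog_mult[OF homog_F4 G(3)] .
    have e2: "10 + 5 * (k - 2) = 5 * k" using k4 by simp
    have "F4 * G \<noteq> 0" using nz_F4 G(2) by simp
    moreover from m1 have "F4 * G \<in> symb_pow Jideal (2 * k)" by (simp only: e1)
    moreover from h1 have "homog_of_deg (F4 * G) (5 * k)" by (simp only: e2)
    ultimately show ?thesis by blast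
  qed
qed

lemma wit_odd: "\<exists>F. F \<in> symb_pow Jideal (2 * k + 1) \<and> F \<noteq> 0 \<and> homog_of_deg F (5 * k + 3)"
proof (cases "k \<ge> 2")
  case True
  obtain G where G: "G \<in> symb_pow Jideal (2 * k)" "G \<noteq> 0" "homog_of_deg G (5 * k)"
    using wit_even[OF True] by blast
  have m1: "g1 * G \<in> symb_pow Jideal (1 + 2 * k)" using symb_pow_mult[OF J_ideal sp_g1 G(1)] .
  have h1: "homog_of_deg (g1 * G) (3 + 5 * k)" using homog_mult[OF homog_g1 G(3)] .
  have "g1 * G \<noteq> 0" using nz_g1 G(2) by simp
  moreover from m1 have "g1 * G \<in> symb_pow Jideal (2 * k + 1)" by (simp only: add.commute)
  moreover from h1 have "homog_of_deg (g1 * G) (5 * k + 3)" by (simp only: add.commute)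
  ultimately show ?thesis by blast
next
  case False
  then have "k = 0 \<or> k = 1" by auto
  then show ?thesis
  proof
    assume "k = 0" then show ?thesis using sp_g1 nz_g1 homog_g1 by auto
  next
    assume "k = 1" then show ?thesis using sp_F3 nz_F3 homog_F3 by auto
  qed
qed

lemma alpha_even: "k \<ge> 2 \<Longrightarrow> alpha (symb_pow Jideal (2 * k)) = 5 * k"
proof -
  assume k: "k \<ge> 2"
  obtain F where F: "F \<in> symb_pow Jideal (2 * k)" "F \<noteq> 0" "homog_of_deg F (5 * k)"
    using wit_even[OF k] by blast
  show ?thesis
  proof (rule alpha_eqI[OF F])
    fix f d assume "f \<in> symb_pow Jideal (2 * k)" "f \<noteq> 0" "homog_of_deg f d"
    then have "30 * (2 * k) \<le> 12 * d" by (rule lower)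
    then show "5 * k \<le> d" by simp
  qed
qed

lemma alpha_odd: "alpha (symb_pow Jideal (2 * k + 1)) = 5 * k + 3"
proof -
  obtain F where F: "F \<in> symb_pow Jideal (2 * k + 1)" "F \<noteq> 0" "homog_of_deg F (5 * k + 3)"
    using wit_odd by blast
  show ?thesis
  proof (rule alpha_eqI[OF F])
    fix f d assume "f \<in> symb_pow Jideal (2 * k + 1)" "f \<noteq> 0" "homog_of_deg f d"
    then have "30 * (2 * k + 1) \<le> 12 * d" by (rule lower)
    then show "5 * k + 3 \<le> d" by simp
  qed
qed

lemma alpha_2: "alpha (symb_pow Jideal 2) = 6"
  by (rule alpha_eqI[OF sp_L6 nz_L6 homog_L6]) (rule lower2)

lemma alpha_bound:
  assumes m: "m \<ge> 1"
  shows "\<bar>real (alpha (symb_pow Jideal m)) / real m - 5 / 2\<bar> \<le> 1 / real m"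
proof (cases "even m")
  case True
  then obtain k where k: "m = 2 * k" by (auto elim: evenE)
  show ?thesis
  proof (cases "k \<ge> 2")
    case True
    then show ?thesis using k alpha_even[OF True] by simp
  next
    case False
    then have "k = 1" using k m by simp
    then show ?thesis using k alpha_2 by simp
  qed
next
  case False
  then obtain k where k: "m = 2 * k + 1" by (auto elim: oddE)
  have "real (5 * k + 3) / real (2 * k + 1) - 5 / 2 = 1 / (2 * real (2 * k + 1))"
    by (simp add: field_simps)
  moreover have "1 / (2 * real (2 * k + 1)) \<le> 1 / real (2 * k + 1)"
    by (simp add: field_simps)
  ultimately show ?thesis using k alpha_odd[of k] by simp
qed

lemma alpha_limit:
  "(\<lambda>m. real (alpha (symb_pow Jideal m)) / real m) \<longlonglongrightarrow> 5 / 2"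
proof -
  let ?f = "\<lambda>m. real (alpha (symb_pow Jideal m)) / real m - 5 / 2"
  have ev: "\<forall>\<^sub>F m in sequentially. norm (?f m) \<le> norm (1 / real m) * 1"
    using alpha_bound by (intro eventually_sequentiallyI[of 1]) simp
  have "(\<lambda>m. 1 / real m) \<longlonglongrightarrow> 0" by (rule lim_1_over_n)
  then have "?f \<longlonglongrightarrow> 0" using tendsto_0_le[OF _ ev] by blast
  then have "(\<lambda>m. ?f m + 5 / 2) \<longlonglongrightarrow> 0 + 5 / 2" by (intro tendsto_add tendsto_const)
  then show ?thesis by simp
qed

theorem theorem4p1:
  shows "((\<lambda>m. real (alpha (symb_pow Jideal m)) / real m) \<longlonglongrightarrow> 5 / 2)
    \<and> (\<forall>k\<ge>2. alpha (symb_pow Jideal (2 * k)) = 5 * k)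
    \<and> (\<forall>k. alpha (symb_pow Jideal (2 * k + 1)) = 5 * k + 3)
    \<and> alpha (symb_pow Jideal 2) = 6"
  using alpha_limit alpha_even alpha_odd alpha_2 by blast


end
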